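(* Let $\mathcal B\subset\mathbb N_{\geq2}$ be a finite set with $\#\mathcal B\geq2$ and $2\in\mathcal B$. Then \[\dim_{\rm H}\{x\in F_{\mathcal B}:\mu(x)>2\}=\dim_{\rm H}F_{\mathcal B}.\]
   Context: For $x\in\mathbb R$, the irrationality exponent $\mu(x)$ is the supremum of the set of $\mu\in\mathbb R$ such that $|x-p/q|<q^{-\mu}$ holds for infinitely many $(p,q)\in\mathbb Z\times\mathbb N$ with $|p|$ and $q$ coprime. Every irrational $x$ has a unique backward continued fraction (BCF) expansion $x=b_0(x)-\cfrac{1}{b_1(x)-\cfrac{1}{b_2(x)-\cdots}}$ with $b_0(x)=\lfloor x\rfloor+1$ and integers $b_n(x)\geq2$ for $n\geq1$. For a finite $\mathcal B\subset\mathbb N_{\geq2}$, $F_{\mathcal B}=\{x\in(0,1)\setminus\mathbb Q: b_n(x)\in\mathcal B\text{ for all }n\geq1\}$. $\dim_{\rm H}$ denotes Hausdorff dimension. *)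

theory Defs
  imports "HOL-Analysis.Analysis"
begin

text \<open>For irrational x: x = b_0 - 1/x_1 with b_0 = floor x + 1 and x_1 = 1/(b_0 - x) > 1,
  iterated. bcf_tail x n is the n-th complete quotient x_n, bcf_digit x n = b_n(x).\<close>

fun bcf_tail :: "real \<Rightarrow> nat \<Rightarrow> real" where
  "bcf_tail x 0 = x"
| "bcf_tail x (Suc n) = 1 / (real_of_int (\<lfloor>bcf_tail x n\<rfloor> + 1) - bcf_tail x n)"

definition bcf_digit :: "real \<Rightarrow> nat \<Rightarrow> int" where
  "bcf_digit x n = \<lfloor>bcf_tail x n\<rfloor> + 1"

definition F_B :: "nat set \<Rightarrow> real set" where
  "F_B B = {x. 0 < x \<and> x < 1 \<and> x \<notin> \<rat> \<and> (\<forall>n\<ge>1. bcf_digit x n \<in> int ` B)}"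

definition irrat_exp :: "real \<Rightarrow> ereal" where
  "irrat_exp x = Sup {ereal m | m. infinite {(p :: int, q :: nat).
      q > 0 \<and> coprime p (int q) \<and> \<bar>x - real_of_int p / real q\<bar> < real q powr (- m)}}"

definition hausdorff_pre :: "real \<Rightarrow> real \<Rightarrow> real set \<Rightarrow> ennreal" where
  "hausdorff_pre s \<delta> A = (INF U \<in> {U :: nat \<Rightarrow> real set. A \<subseteq> (\<Union>i. U i) \<and>
      (\<forall>i. bounded (U i) \<and> diameter (U i) \<le> \<delta>)}. (\<Sum>i. ennreal (diameter (U i) powr s)))"

definition hausdorff_measure :: "real \<Rightarrow> real set \<Rightarrow> ennreal" where
  "hausdorff_measure s A = (SUP \<delta> \<in> {0<..}. hausdorff_pre s \<delta> A)"

text \<open>dim_H A = inf {s > 0. H^s(A) = 0} (the infimum over s > 0 avoids the 0^0 convention).\<close>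
definition hausdorff_dim :: "real set \<Rightarrow> real" where
  "hausdorff_dim A = Inf {s. s > 0 \<and> hausdorff_measure s A = 0}"

end

theory Submission
  imports Defs
begin


lemma tail_irrat: assumes "x \<notin> \<rat>" shows "bcf_tail x n \<notin> \<rat>"
proof (induction n)
  case 0 then show ?case using assms by simp
next
  case (Suc n)
  let ?t = "bcf_tail x n"
  show ?case
  proof
    assume h: "bcf_tail x (Suc n) \<in> \<rat>"
    have ne: "real_of_int (\<lfloor>?t\<rfloor> + 1) - ?t \<noteq> 0"
      using Suc by (metis Rats_of_int eq_iff_diff_eq_0)
    have "real_of_int (\<lfloor>?t\<rfloor> + 1) - ?t = 1 / bcf_tail x (Suc n)"
      using ne by simp
    hence "real_of_int (\<lfloor>?t\<rfloor> + 1) - ?t \<in> \<rat>" using h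
      by (metis Rats_inverse inverse_eq_divide inverse_inverse_eq)
    hence "?t = real_of_int (\<lfloor>?t\<rfloor> + 1) - (real_of_int (\<lfloor>?t\<rfloor> + 1) - ?t)" by simp
    moreover have "real_of_int (\<lfloor>?t\<rfloor> + 1) - (real_of_int (\<lfloor>?t\<rfloor> + 1) - ?t) \<in> \<rat>"
      using Rats_diff[OF Rats_of_int \<open>real_of_int (\<lfloor>?t\<rfloor> + 1) - ?t \<in> \<rat>\<close>] .
    ultimately show False using Suc by simp
  qed
qed

lemma digit_bounds: assumes "x \<notin> \<rat>"
  shows "bcf_digit x n - 1 < bcf_tail x n" "bcf_tail x n < bcf_digit x n"
proof -
  have ni: "bcf_tail x n \<noteq> of_int \<lfloor>bcf_tail x n\<rfloor>" using tail_irrat[OF assms, of n]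
    by (metis Rats_of_int)
  show "bcf_digit x n - 1 < bcf_tail x n" unfolding bcf_digit_def
    using of_int_floor_le[of "bcf_tail x n"] ni by linarith
  show "bcf_tail x n < bcf_digit x n" unfolding bcf_digit_def by linarith
qed

lemma tail_Suc: "bcf_tail x (Suc n) = 1 / (bcf_digit x n - bcf_tail x n)"
  unfolding bcf_digit_def by simp

lemma tail_gt1: assumes "x \<notin> \<rat>" shows "bcf_tail x (Suc n) > 1"
proof -
  have "0 < bcf_digit x n - bcf_tail x n" "bcf_digit x n - bcf_tail x n < 1"
    using digit_bounds[OF assms, of n] by auto
  thus ?thesis unfolding tail_Suc by (simp del: bcf_tail.simps)
qed

lemma tail_rec: assumes "x \<notin> \<rat>"
  shows "bcf_tail x n = bcf_digit x n - 1 / bcf_tail x (Suc n)"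
proof -
  have "0 < bcf_digit x n - bcf_tail x n" using digit_bounds[OF assms, of n] by auto
  thus ?thesis unfolding tail_Suc by (simp del: bcf_tail.simps)
qed

lemma digit0: assumes "0 < x" "x < 1" shows "bcf_digit x 0 = 1"
proof -
  have "\<lfloor>x\<rfloor> = 0" using assms by (simp add: floor_eq_iff)
  thus ?thesis by (simp add: bcf_digit_def)
qed

lemma x_eq_tail1: assumes "0 < x" "x < 1" "x \<notin> \<rat>"
  shows "x = 1 - 1 / bcf_tail x 1"
  using tail_rec[OF assms(3), of 0] digit0[OF assms(1,2)] by simp


declare bcf_tail.simps(2)[simp del]

lemma dist_formula:
  assumes x: "0 < x" "x < 1" "x \<notin> \<rat>" and y: "0 < y" "y < 1" "y \<notin> \<rat>"
    and N: "N \<ge> 1" and eq: "\<forall>i. 1 \<le> i \<and> i < N \<longrightarrow> bcf_digit x i = bcf_digit y i"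
  shows "x - y = (bcf_tail x N - bcf_tail y N) / (\<Prod>i\<in>{1..N}. bcf_tail x i * bcf_tail y i)"
  using N eq
proof (induction N rule: dec_induct)
  case base
  have "x = 1 - 1 / bcf_tail x 1" "y = 1 - 1 / bcf_tail y 1" using x_eq_tail1 x y by auto
  moreover have "bcf_tail x 1 > 1" "bcf_tail y 1 > 1" using tail_gt1[OF x(3), of 0] tail_gt1[OF y(3), of 0] by auto
  ultimately show ?case
  proof -
    assume h: "x = 1 - 1 / bcf_tail x 1" "y = 1 - 1 / bcf_tail y 1"
       "bcf_tail x 1 > 1" "bcf_tail y 1 > 1"
    define a where "a = bcf_tail x 1"
    define b where "b = bcf_tail y 1"
    have ha: "a > 1" "b > 1" using h a_def b_def by auto
    have "x = (a - 1) / a" "y = (b - 1) / b" using h ha unfolding a_def[symmetric] b_def[symmetric]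
      by (auto simp: field_simps)
    moreover have "(a - 1) / a - (b - 1) / b = (a - b) / (a * b)" using ha by (simp add: field_simps)
    ultimately have "x - y = (a - b) / (a * b)" by simp
    thus ?thesis by (simp add: a_def b_def)
  qed
next
  case (step n)
  let ?a = "bcf_tail x" and ?b = "bcf_tail y"
  have IH: "x - y = (?a n - ?b n) / (\<Prod>i\<in>{1..n}. ?a i * ?b i)" using step by auto
  have d: "bcf_digit x n = bcf_digit y n" using step by auto
  have ra: "?a n = bcf_digit x n - 1 / ?a (Suc n)" using tail_rec[OF x(3)] .
  have rb: "?b n = bcf_digit y n - 1 / ?b (Suc n)" using tail_rec[OF y(3)] .
  have pa: "?a (Suc n) > 1" "?b (Suc n) > 1" using tail_gt1 x y by auto
  have gen: "\<And>dd p q::real. p > 1 \<Longrightarrow> q > 1 \<Longrightarrow> (dd - 1/p) - (dd - 1/q) = (p - q) / (p * q)"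
    by (simp add: field_simps)
  have "?a n - ?b n = (?a (Suc n) - ?b (Suc n)) / (?a (Suc n) * ?b (Suc n))"
    unfolding ra rb d using gen pa by simp
  moreover have "(\<Prod>i\<in>{1..Suc n}. ?a i * ?b i) = (\<Prod>i\<in>{1..n}. ?a i * ?b i) * (?a (Suc n) * ?b (Suc n))"
    using step.hyps by (simp add: prod.nat_ivl_Suc')
  ultimately show ?case using IH by simp
qed

lemma prod_unbounded:
  fixes t :: "nat \<Rightarrow> real"
  assumes ge1: "\<forall>i>m. t i \<ge> 1" and inf2: "\<forall>n. \<exists>i>n. t i \<ge> 2"
  shows "\<exists>n\<ge>m. prod t {m<..n} \<ge> 2^k"
proof (induction k)
  case 0 show ?case by (rule exI[of _ m]) simp
next
  case (Suc k)
  then obtain n where n: "n \<ge> m" "prod t {m<..n} \<ge> 2^k" by auto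
  obtain j where j: "j > n" "t j \<ge> 2" using inf2 by auto
  have split: "{m<..j} = {m<..n} \<union> {n<..<j} \<union> {j}" using n j by auto
  have "prod t {m<..j} = prod t ({m<..n} \<union> {n<..<j}) * t j"
    unfolding split using n j by (subst prod.union_disjoint) auto
  also have "prod t ({m<..n} \<union> {n<..<j}) = prod t {m<..n} * prod t {n<..<j}"
    by (subst prod.union_disjoint) auto
  finally have "prod t {m<..j} = prod t {m<..n} * prod t {n<..<j} * t j" .
  moreover have "prod t {n<..<j} \<ge> 1" using ge1 n by (intro prod_ge_1) auto
  moreover have "prod t {m<..n} \<ge> 0" using ge1 by (intro prod_nonneg) auto
  ultimately have "prod t {m<..j} \<ge> 2^k * 1 * 2"
  proof -
    assume e: "prod t {m<..j} = prod t {m<..n} * prod t {n<..<j} * t j"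
      "prod t {n<..<j} \<ge> 1" "prod t {m<..n} \<ge> 0"
    have "2^k * 1 \<le> prod t {m<..n} * prod t {n<..<j}"
      using e n by (intro mult_mono) auto
    moreover have "0 \<le> prod t {m<..n} * prod t {n<..<j}" using e by simp
    ultimately have "2^k * 1 * 2 \<le> prod t {m<..n} * prod t {n<..<j} * t j"
      using j mult_mono[of "2^k*1" "prod t {m<..n} * prod t {n<..<j}" 2 "t j"] by simp
    thus ?thesis using e by simp
  qed
  thus ?case using j n by (intro exI[of _ j]) auto
qed


locale bset =
  fixes B :: "nat set"
  assumes finB: "finite B" and cardB: "card B \<ge> 2" and twoB: "2 \<in> B" and geB: "\<forall>b\<in>B. b \<ge> 2"
begin

definition K :: nat where "K = Max B"

lemma K_ge: "b \<in> B \<Longrightarrow> b \<le> K" unfolding K_def using finB by simp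

lemma K_ge3: "K \<ge> 3"
proof -
  have "B - {2} \<noteq> {}"
  proof
    assume "B - {2} = {}"
    hence "B \<subseteq> {2}" by auto
    hence "card B \<le> card {2::nat}" by (intro card_mono) auto
    hence "card B \<le> 1" by simp
    thus False using cardB by simp
  qed
  then obtain b where "b \<in> B" "b \<noteq> 2" by auto
  hence "b \<ge> 3" using geB by force
  thus ?thesis using K_ge[OF \<open>b \<in> B\<close>] by simp
qed

lemma FB_basic: assumes "x \<in> F_B B" shows "0 < x" "x < 1" "x \<notin> \<rat>"
  using assms unfolding F_B_def by auto

lemma FB_digit: assumes "x \<in> F_B B" "n \<ge> 1"
  shows "nat (bcf_digit x n) \<in> B" "bcf_digit x n \<ge> 2" "bcf_digit x n \<le> int K"
    "bcf_digit x n = int (nat (bcf_digit x n))"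
proof -
  obtain b where b: "b \<in> B" "bcf_digit x n = int b" using assms unfolding F_B_def by blast
  thus "nat (bcf_digit x n) \<in> B" "bcf_digit x n \<ge> 2" "bcf_digit x n \<le> int K"
    "bcf_digit x n = int (nat (bcf_digit x n))"
    using geB K_ge by auto
qed

lemma FB_tail: assumes "x \<in> F_B B" "n \<ge> 1"
  shows "bcf_tail x n > 1" "bcf_tail x n < K" "bcf_tail x n < bcf_digit x n"
    "bcf_tail x n > bcf_digit x n - 1"
proof -
  have xi: "x \<notin> \<rat>" using FB_basic assms by auto
  obtain m where "n = Suc m" using assms by (cases n) auto
  thus "bcf_tail x n > 1" using tail_gt1[OF xi] by simp
  show "bcf_tail x n < bcf_digit x n" "bcf_tail x n > bcf_digit x n - 1" using digit_bounds[OF xi] by auto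
  thus "bcf_tail x n < K" using FB_digit[OF assms] by linarith
qed

lemma FB_inf_non2: assumes "x \<in> F_B B" shows "\<exists>m>n. bcf_digit x m \<noteq> 2"
proof (rule ccontr)
  assume "\<not> ?thesis"
  hence all2: "\<forall>m>n. bcf_digit x m = 2" by auto
  have xi: "x \<notin> \<rat>" using FB_basic assms by auto
  define z where "z m = 1 / (bcf_tail x m - 1)" for m
  have zrec: "z m = z (Suc m) + 1" if "m > n" for m
  proof -
    have r: "bcf_tail x m = 2 - 1 / bcf_tail x (Suc m)" using tail_rec[OF xi, of m] all2 that by simp
    have g: "bcf_tail x (Suc m) > 1" using tail_gt1[OF xi] by simp
    have gen: "\<And>t::real. t > 1 \<Longrightarrow> 1 / ((2 - 1/t) - 1) = 1 / (t - 1) + 1"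
      by (simp add: field_simps)
    show ?thesis unfolding z_def r using gen[OF g] .
  qed
  have zpos: "z m > 0" if "m \<ge> 1" for m
    using FB_tail(1)[OF assms that] unfolding z_def by simp
  have "z (Suc n) = z (Suc n + k) + real k" for k
  proof (induction k)
    case 0 then show ?case by simp
  next
    case (Suc k) then show ?case using zrec[of "Suc n + k"] by simp
  qed
  hence "z (Suc n) > real k" for k
  proof -
    assume h: "\<And>k. z (Suc n) = z (Suc n + k) + real k"
    have "z (Suc n + k) > 0" using zpos[of "Suc n + k"] by simp
    thus ?thesis using h[of k] by linarith
  qed
  from this[of "nat \<lceil>z (Suc n)\<rceil>"] show False by linarith
qed

lemma FB_inf_tail2: assumes "x \<in> F_B B" shows "\<forall>n. \<exists>i>n. bcf_tail x i \<ge> 2"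
proof
  fix n
  obtain m where m: "m > n" "bcf_digit x m \<noteq> 2" using FB_inf_non2[OF assms] by auto
  have "bcf_digit x m \<ge> 3" using FB_digit(2)[OF assms, of m] m by simp
  hence "bcf_tail x m \<ge> 2" using FB_tail(4)[OF assms, of m] m by simp
  thus "\<exists>i>n. bcf_tail x i \<ge> 2" using m by auto
qed

lemma FB_prod_unbounded: assumes "x \<in> F_B B"
  shows "\<exists>n\<ge>m. (\<Prod>i\<in>{m<..n}. bcf_tail x i) \<ge> 2^k"
  by (rule prod_unbounded) (use FB_tail(1)[OF assms] FB_inf_tail2[OF assms] in \<open>auto intro: less_imp_le\<close>)

lemma FB_unique: assumes x: "x \<in> F_B B" and y: "y \<in> F_B B"
  and eq: "\<forall>n\<ge>1. bcf_digit x n = bcf_digit y n"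
  shows "x = y"
proof -
  have bx: "0 < x" "x < 1" "x \<notin> \<rat>" and "0 < y" "y < 1" "y \<notin> \<rat>" using FB_basic x y by auto
  have bound: "\<bar>x - y\<bar> \<le> K / 2^k" for k
  proof -
    obtain n where n0: "n \<ge> 0" "(\<Prod>i\<in>{0<..n}. bcf_tail x i) \<ge> 2^(Suc k)" using FB_prod_unbounded[OF x, of 0 "Suc k"] by auto
    have n1: "n \<ge> 1"
    proof (rule ccontr)
      assume "\<not> n \<ge> 1"
      hence "n = 0" by simp
      hence "(2::real)^(Suc k) \<le> 1" using n0(2) by simp
      moreover have "(2::real)^k \<ge> 1" by simp
      ultimately show False by simp
    qed
    have "(2::real)^k \<le> 2^(Suc k)" by simp
    hence n: "n \<ge> 0" "(\<Prod>i\<in>{0<..n}. bcf_tail x i) \<ge> 2^k" using n0 by linarith+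
    have "x - y = (bcf_tail x n - bcf_tail y n) / (\<Prod>i\<in>{1..n}. bcf_tail x i * bcf_tail y i)"
      by (rule dist_formula) (use FB_basic x y eq n1 in auto)
    moreover have "{0<..n} = {1..n}" by auto
    moreover have "(\<Prod>i\<in>{1..n}. bcf_tail x i * bcf_tail y i) = (\<Prod>i\<in>{1..n}. bcf_tail x i) * (\<Prod>i\<in>{1..n}. bcf_tail y i)"
      by (simp add: prod.distrib)
    moreover have "(\<Prod>i\<in>{1..n}. bcf_tail y i) \<ge> 1" using FB_tail(1)[OF y] by (intro prod_ge_1) (auto intro: less_imp_le)
    moreover have "\<bar>bcf_tail x n - bcf_tail y n\<bar> \<le> K" using FB_tail[OF x n1] FB_tail[OF y n1] by auto
    ultimately show ?thesis
    proof -
      assume a: "x - y = (bcf_tail x n - bcf_tail y n) / (\<Prod>i\<in>{1..n}. bcf_tail x i * bcf_tail y i)"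
        "{0<..n} = {1..n}"
        "(\<Prod>i\<in>{1..n}. bcf_tail x i * bcf_tail y i) = (\<Prod>i\<in>{1..n}. bcf_tail x i) * (\<Prod>i\<in>{1..n}. bcf_tail y i)"
        "(\<Prod>i\<in>{1..n}. bcf_tail y i) \<ge> 1" "\<bar>bcf_tail x n - bcf_tail y n\<bar> \<le> K"
      define P where "P = (\<Prod>i\<in>{1..n}. bcf_tail x i) * (\<Prod>i\<in>{1..n}. bcf_tail y i)"
      have X: "(\<Prod>i\<in>{1..n}. bcf_tail x i) \<ge> 2^k" using n(2) a(2) by simp
      have "(\<Prod>i\<in>{1..n}. bcf_tail x i) * 1 \<le> P" unfolding P_def
        using X a(4) by (intro mult_left_mono) (auto intro: order_trans[of 0 "2^k"])
      hence P: "P \<ge> 2^k" using X by simp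
      have Ppos: "P > 0" using P by (smt (verit) zero_less_power)
      have "x - y = (bcf_tail x n - bcf_tail y n) / P" using a(1,3) unfolding P_def by simp
      hence "\<bar>x - y\<bar> = \<bar>bcf_tail x n - bcf_tail y n\<bar> / P" using Ppos by (simp add: abs_divide)
      also have "\<dots> \<le> K / P" using a(5) P by (intro divide_right_mono) (auto intro: order_trans[of 0 "2^k"])
      also have "\<dots> \<le> K / 2^k" using P Ppos by (intro divide_left_mono) auto
      finally show ?thesis .
    qed
  qed
  show ?thesis
  proof (rule ccontr)
    assume "x \<noteq> y"
    hence d: "\<bar>x - y\<bar> > 0" by simp
    obtain k where "(1/2::real)^k < \<bar>x - y\<bar> / (K + 1)"
      using real_arch_pow_inv[of "\<bar>x - y\<bar> / (K + 1)" "1/2"] d by auto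
    hence "1 / 2^k < \<bar>x - y\<bar> / (K + 1)" by (simp add: power_one_over)
    hence "(K + 1) / 2^k < \<bar>x - y\<bar>" by (simp add: field_simps)
    moreover have "K / 2^k \<le> (K + 1) / 2^k" by (intro divide_right_mono) auto
    ultimately have "K / 2^k < \<bar>x - y\<bar>" by linarith
    thus False using bound[of k] by simp
  qed
qed

end


fun vv :: "(nat \<Rightarrow> nat) \<Rightarrow> nat \<Rightarrow> nat \<Rightarrow> real" where
  "vv \<sigma> 0 n = 1"
| "vv \<sigma> (Suc k) n = real (\<sigma> n) - 1 / vv \<sigma> k (Suc n)"

definition tl_lim :: "(nat \<Rightarrow> nat) \<Rightarrow> nat \<Rightarrow> real" where
  "tl_lim \<sigma> n = (SUP k. vv \<sigma> k n)"

definition pi_pt :: "(nat \<Rightarrow> nat) \<Rightarrow> real" where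
  "pi_pt \<sigma> = 1 - 1 / tl_lim \<sigma> 1"

lemma inv_rec: "(u::real) \<noteq> 0 \<Longrightarrow> t = s - 1 / u \<Longrightarrow> 1 / (s - t) = u" by simp

context bset begin

definition valid :: "(nat \<Rightarrow> nat) \<Rightarrow> bool" where
  "valid \<sigma> \<longleftrightarrow> (\<forall>n\<ge>1. \<sigma> n \<in> B) \<and> (\<forall>n. \<exists>m>n. \<sigma> m \<noteq> 2)"

lemma valid_ge2: "valid \<sigma> \<Longrightarrow> n \<ge> 1 \<Longrightarrow> \<sigma> n \<ge> 2"
  unfolding valid_def using geB by auto

lemma valid_leK: "valid \<sigma> \<Longrightarrow> n \<ge> 1 \<Longrightarrow> \<sigma> n \<le> K"
  unfolding valid_def using K_ge by auto

lemma vv_ge1: "valid \<sigma> \<Longrightarrow> n \<ge> 1 \<Longrightarrow> 1 \<le> vv \<sigma> k n"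
proof (induction k arbitrary: n)
  case 0 then show ?case by simp
next
  case (Suc k)
  have "1 \<le> vv \<sigma> k (Suc n)" using Suc by simp
  hence "1 / vv \<sigma> k (Suc n) \<le> 1" by simp
  moreover have "real (\<sigma> n) \<ge> 2" using valid_ge2[OF Suc.prems] by simp
  ultimately show ?case by simp
qed

lemma vv_le: "valid \<sigma> \<Longrightarrow> n \<ge> 1 \<Longrightarrow> vv \<sigma> k n \<le> \<sigma> n"
proof (cases k)
  case 0
  assume "valid \<sigma>" "n \<ge> 1"
  then show ?thesis using 0 valid_ge2 by fastforce
next
  case (Suc k')
  assume v: "valid \<sigma>" "n \<ge> 1"
  have "1 \<le> vv \<sigma> k' (Suc n)" using vv_ge1 v by simp
  then show ?thesis using Suc by simp
qed

lemma vv_mono: "valid \<sigma> \<Longrightarrow> n \<ge> 1 \<Longrightarrow> vv \<sigma> k n \<le> vv \<sigma> (Suc k) n"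
proof (induction k arbitrary: n)
  case 0 then show ?case using valid_ge2[OF 0(1,2)] by simp
next
  case (Suc k)
  have a: "vv \<sigma> k (Suc n) \<le> vv \<sigma> (Suc k) (Suc n)" using Suc by simp
  have b: "1 \<le> vv \<sigma> k (Suc n)" using vv_ge1 Suc.prems by simp
  have "1 / vv \<sigma> (Suc k) (Suc n) \<le> 1 / vv \<sigma> k (Suc n)"
    using a b by (intro divide_left_mono) auto
  thus ?case by simp
qed

lemma vv_lim: assumes "valid \<sigma>" "n \<ge> 1" shows "(\<lambda>k. vv \<sigma> k n) \<longlonglongrightarrow> tl_lim \<sigma> n"
  unfolding tl_lim_def
proof (rule LIMSEQ_incseq_SUP)
  show "bdd_above (range (\<lambda>k. vv \<sigma> k n))" using vv_le[OF assms] by (intro bdd_aboveI) auto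
  show "incseq (\<lambda>k. vv \<sigma> k n)" using vv_mono[OF assms] by (intro incseq_SucI) auto
qed

lemma tl_bounds: assumes "valid \<sigma>" "n \<ge> 1" shows "1 \<le> tl_lim \<sigma> n" "tl_lim \<sigma> n \<le> \<sigma> n"
proof -
  show "1 \<le> tl_lim \<sigma> n" using vv_lim[OF assms] vv_ge1[OF assms]
    by (intro LIMSEQ_le_const) auto
  show "tl_lim \<sigma> n \<le> \<sigma> n" using vv_lim[OF assms] vv_le[OF assms]
    by (intro LIMSEQ_le_const2) auto
qed

lemma tl_rec: assumes "valid \<sigma>" "n \<ge> 1" shows "tl_lim \<sigma> n = \<sigma> n - 1 / tl_lim \<sigma> (Suc n)"
proof -
  have l1: "(\<lambda>k. vv \<sigma> (Suc k) n) \<longlonglongrightarrow> tl_lim \<sigma> n" using vv_lim[OF assms] by (rule LIMSEQ_Suc)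
  have ne: "tl_lim \<sigma> (Suc n) \<noteq> 0" using tl_bounds(1)[OF assms(1), of "Suc n"] by simp
  have "(\<lambda>k. real (\<sigma> n) - 1 / vv \<sigma> k (Suc n)) \<longlonglongrightarrow> \<sigma> n - 1 / tl_lim \<sigma> (Suc n)"
    using vv_lim[OF assms(1), of "Suc n"] ne by (intro tendsto_intros) auto
  hence "(\<lambda>k. vv \<sigma> (Suc k) n) \<longlonglongrightarrow> \<sigma> n - 1 / tl_lim \<sigma> (Suc n)" by simp
  thus ?thesis using l1 LIMSEQ_unique by blast
qed

lemma tl_gt1: assumes "valid \<sigma>" "n \<ge> 1" shows "tl_lim \<sigma> n > 1"
proof (rule ccontr)
  assume "\<not> ?thesis"
  hence e: "tl_lim \<sigma> n = 1" using tl_bounds[OF assms] by simp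
  have step: "tl_lim \<sigma> m = 1 \<Longrightarrow> m \<ge> 1 \<Longrightarrow> \<sigma> m = 2 \<and> tl_lim \<sigma> (Suc m) = 1" for m
  proof -
    assume h: "tl_lim \<sigma> m = 1" "m \<ge> 1"
    have r: "1 = real (\<sigma> m) - 1 / tl_lim \<sigma> (Suc m)" using tl_rec[OF assms(1) h(2)] h by simp
    have b: "1 \<le> tl_lim \<sigma> (Suc m)" using tl_bounds[OF assms(1), of "Suc m"] by simp
    have s2: "real (\<sigma> m) \<ge> 2" using valid_ge2[OF assms(1) h(2)] by simp
    have "1 / tl_lim \<sigma> (Suc m) \<le> 1" using b by simp
    hence "real (\<sigma> m) \<le> 2" using r by linarith
    hence "\<sigma> m = 2" using s2 by simp
    moreover have "tl_lim \<sigma> (Suc m) = 1" using r \<open>\<sigma> m = 2\<close> b by (simp add: field_simps)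
    ultimately show ?thesis by simp
  qed
  have "\<sigma> (n + k) = 2 \<and> tl_lim \<sigma> (n + k) = 1" for k
  proof (induction k)
    case 0 then show ?case using step[OF e assms(2)] e by simp
  next
    case (Suc k) then show ?case using step[of "n + k"] step[of "n + Suc k"] assms(2) by simp
  qed
  moreover obtain m where "m > n" "\<sigma> m \<noteq> 2" using assms(1) unfolding valid_def by blast
  ultimately show False by (metis less_imp_add_positive)
qed

lemma tl_lt: assumes "valid \<sigma>" "n \<ge> 1" shows "tl_lim \<sigma> n < \<sigma> n" "tl_lim \<sigma> n > real (\<sigma> n) - 1"
proof -
  have g: "tl_lim \<sigma> (Suc n) > 1" using tl_gt1[OF assms(1)] by simp
  show "tl_lim \<sigma> n < \<sigma> n" using tl_rec[OF assms] g by simp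
  have "1 / tl_lim \<sigma> (Suc n) < 1" using g by simp
  thus "tl_lim \<sigma> n > real (\<sigma> n) - 1" using tl_rec[OF assms] by simp
qed

lemma tl_not_rat: assumes "valid \<sigma>"
  shows "c > 0 \<Longrightarrow> n \<ge> 1 \<Longrightarrow> tl_lim \<sigma> n \<noteq> of_int a / of_nat c"
proof (induction c arbitrary: n a rule: less_induct)
  case (less c)
  show ?case
  proof
    assume e: "tl_lim \<sigma> n = of_int a / of_nat c"
    define d where "d = int (\<sigma> n) * int c - a"
    have cpos: "real c > 0" using less by simp
    have lt: "tl_lim \<sigma> n < \<sigma> n" "tl_lim \<sigma> n > real (\<sigma> n) - 1" using tl_lt[OF assms less(3)] by auto
    have "real_of_int a < real (\<sigma> n) * real c" using lt(1) e cpos by (simp add: field_simps)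
    hence "of_int a < (of_int (int (\<sigma> n) * int c) :: real)" by simp
    hence "a < int (\<sigma> n) * int c" by (simp only: of_int_less_iff)
    hence dpos: "d > 0" unfolding d_def by simp
    have "real_of_int a > (real (\<sigma> n) - 1) * real c" using lt(2) e cpos by (simp add: field_simps)
    hence "(of_int ((int (\<sigma> n) - 1) * int c) :: real) < of_int a" by simp
    hence "(int (\<sigma> n) - 1) * int c < a" by (simp only: of_int_less_iff)
    hence dlt: "d < int c" unfolding d_def by (simp add: algebra_simps)
    have "tl_lim \<sigma> (Suc n) = 1 / (real (\<sigma> n) - tl_lim \<sigma> n)"
      using inv_rec[OF _ tl_rec[OF assms less(3)]] tl_gt1[OF assms, of "Suc n"] by simp
    also have "\<dots> = of_int (int c) / of_nat (nat d)"
    proof -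
      have gen: "\<And>(cc::real) s aa. cc > 0 \<Longrightarrow> s*cc - aa \<noteq> 0 \<Longrightarrow> 1/(s - aa/cc) = cc/(s*cc - aa)"
        by (simp add: field_simps)
      have "real_of_int d = real (\<sigma> n) * real c - of_int a" unfolding d_def by simp
      moreover have "real (nat d) = real_of_int d" using dpos by simp
      ultimately show ?thesis using gen[OF cpos, of "real (\<sigma> n)" "of_int a"] dpos e by simp
    qed
    finally have "tl_lim \<sigma> (Suc n) = of_int (int c) / of_nat (nat d)" .
    moreover have "nat d < c" "nat d > 0" using dpos dlt by auto
    ultimately show False using less.IH[of "nat d" "Suc n" "int c"] by simp
  qed
qed

lemma pi_pt_props: assumes v: "valid \<sigma>"
  shows "pi_pt \<sigma> \<in> F_B B" "\<And>n. n \<ge> 1 \<Longrightarrow> bcf_tail (pi_pt \<sigma>) n = tl_lim \<sigma> n"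
    "\<And>n. n \<ge> 1 \<Longrightarrow> bcf_digit (pi_pt \<sigma>) n = int (\<sigma> n)"
proof -
  let ?y = "pi_pt \<sigma>"
  have t1: "tl_lim \<sigma> 1 > 1" using tl_gt1[OF v] by simp
  have y01: "0 < ?y" "?y < 1" unfolding pi_pt_def using t1 by auto
  have fl: "\<lfloor>?y\<rfloor> = 0" using y01 by (simp add: floor_eq_iff)
  have tails: "bcf_tail ?y n = tl_lim \<sigma> n" if "n \<ge> 1" for n
    using that
  proof (induction n rule: dec_induct)
    case base
    have "bcf_tail ?y 1 = 1 / (1 - ?y)" using fl by (simp add: bcf_tail.simps)
    also have "\<dots> = tl_lim \<sigma> 1" unfolding pi_pt_def using t1 by simp
    finally show ?case .
  next
    case (step n)
    have fl2: "\<lfloor>tl_lim \<sigma> n\<rfloor> = int (\<sigma> n) - 1"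
      using tl_lt[OF v step.hyps(1)] by (simp add: floor_eq_iff)
    have "bcf_tail ?y (Suc n) = 1 / (real (\<sigma> n) - tl_lim \<sigma> n)"
      using step.IH fl2 by (simp add: bcf_tail.simps)
    also have "\<dots> = tl_lim \<sigma> (Suc n)"
      using inv_rec[OF _ tl_rec[OF v step.hyps(1)]] tl_gt1[OF v, of "Suc n"] by simp
    finally show ?case .
  qed
  show "\<And>n. n \<ge> 1 \<Longrightarrow> bcf_tail ?y n = tl_lim \<sigma> n" using tails by auto
  have digs: "bcf_digit ?y n = int (\<sigma> n)" if "n \<ge> 1" for n
  proof -
    have "\<lfloor>tl_lim \<sigma> n\<rfloor> = int (\<sigma> n) - 1" using tl_lt[OF v that] by (simp add: floor_eq_iff)
    thus ?thesis unfolding bcf_digit_def tails[OF that] by simp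
  qed
  show "\<And>n. n \<ge> 1 \<Longrightarrow> bcf_digit ?y n = int (\<sigma> n)" using digs by auto
  have irr: "?y \<notin> \<rat>"
  proof
    assume "?y \<in> \<rat>"
    hence "1 - ?y \<in> \<rat>" by (simp add: Rats_diff)
    hence "1 / (1 - ?y) \<in> \<rat>" by (simp add: Rats_divide)
    moreover have "1 / (1 - ?y) = tl_lim \<sigma> 1" unfolding pi_pt_def using t1 by simp
    ultimately have "tl_lim \<sigma> 1 \<in> \<rat>" by simp
    then obtain a b where ab: "b > 0" "tl_lim \<sigma> 1 = of_int a / of_int b" by (auto elim: Rats_cases')
    hence "tl_lim \<sigma> 1 = of_int a / of_nat (nat b)" by simp
    thus False using tl_not_rat[OF v, of "nat b" 1 a] ab by simp
  qed
  show "?y \<in> F_B B" unfolding F_B_def using y01 irr digs v unfolding valid_def by auto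
qed

end


fun qq :: "(nat \<Rightarrow> int) \<Rightarrow> nat \<Rightarrow> int \<times> int" where
  "qq \<tau> 0 = (1, 0)"
| "qq \<tau> (Suc m) = (\<tau> (Suc m) * fst (qq \<tau> m) - snd (qq \<tau> m), fst (qq \<tau> m))"

fun pq :: "(nat \<Rightarrow> int) \<Rightarrow> nat \<Rightarrow> int \<times> int" where
  "pq \<tau> 0 = (1, 1)"
| "pq \<tau> (Suc m) = (\<tau> (Suc m) * fst (pq \<tau> m) - snd (pq \<tau> m), fst (pq \<tau> m))"

definition Dd :: "(nat \<Rightarrow> int) \<Rightarrow> nat \<Rightarrow> int" where
  "Dd \<tau> m = fst (qq \<tau> m) - snd (qq \<tau> m)"

lemma qq_cong: "(\<forall>i. 1 \<le> i \<and> i \<le> m \<longrightarrow> \<tau> i = \<tau>' i) \<Longrightarrow> qq \<tau> m = qq \<tau>' m"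
  by (induction m) auto

lemma Dd_cong: "(\<forall>i. 1 \<le> i \<and> i \<le> m \<longrightarrow> \<tau> i = \<tau>' i) \<Longrightarrow> Dd \<tau> m = Dd \<tau>' m"
  unfolding Dd_def using qq_cong by metis

lemma det_pq: "fst (pq \<tau> m) * snd (qq \<tau> m) - snd (pq \<tau> m) * fst (qq \<tau> m) = -1"
  by (induction m) (auto simp: algebra_simps)

lemma qq_pos: assumes "\<forall>i. 1 \<le> i \<and> i \<le> m \<longrightarrow> \<tau> i \<ge> 2"
  shows "Dd \<tau> m \<ge> 1" "snd (qq \<tau> m) \<ge> 0" "fst (qq \<tau> m) \<ge> 1"
proof -
  have "Dd \<tau> m \<ge> 1 \<and> snd (qq \<tau> m) \<ge> 0" using assms
  proof (induction m)
    case 0 then show ?case by (simp add: Dd_def)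
  next
    case (Suc m)
    hence IH: "fst (qq \<tau> m) - snd (qq \<tau> m) \<ge> 1" "snd (qq \<tau> m) \<ge> 0" by (auto simp: Dd_def)
    have t: "\<tau> (Suc m) \<ge> 2" using Suc.prems by simp
    have "\<tau> (Suc m) * fst (qq \<tau> m) \<ge> 2 * fst (qq \<tau> m)" using t IH by (intro mult_right_mono) auto
    hence "\<tau> (Suc m) * fst (qq \<tau> m) - snd (qq \<tau> m) - fst (qq \<tau> m) \<ge> 1" using IH by linarith
    thus ?case using IH by (simp add: Dd_def)
  qed
  thus "Dd \<tau> m \<ge> 1" "snd (qq \<tau> m) \<ge> 0" "fst (qq \<tau> m) \<ge> 1" by (auto simp: Dd_def)
qed

lemma Dd_Suc: "Dd \<tau> (Suc m) = Dd \<tau> m + (\<tau> (Suc m) - 2) * fst (qq \<tau> m)"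
  by (simp add: Dd_def algebra_simps)

lemma Dd_mono_step: assumes "\<forall>i. 1 \<le> i \<and> i \<le> Suc m \<longrightarrow> \<tau> i \<ge> 2"
  shows "Dd \<tau> m \<le> Dd \<tau> (Suc m)" "\<tau> (Suc m) \<ge> 3 \<Longrightarrow> Dd \<tau> m + 1 \<le> Dd \<tau> (Suc m)"
proof -
  have q: "fst (qq \<tau> m) \<ge> 1" using qq_pos[of m \<tau>] assms by auto
  have t: "\<tau> (Suc m) \<ge> 2" using assms by auto
  show "Dd \<tau> m \<le> Dd \<tau> (Suc m)" unfolding Dd_Suc using q t by simp
  assume "\<tau> (Suc m) \<ge> 3"
  hence "(\<tau> (Suc m) - 2) * fst (qq \<tau> m) \<ge> 1 * 1" using q by (intro mult_mono) auto
  thus "Dd \<tau> m + 1 \<le> Dd \<tau> (Suc m)" unfolding Dd_Suc by simp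
qed

lemma Dd_mono: assumes "\<forall>i. 1 \<le> i \<and> i \<le> n \<longrightarrow> \<tau> i \<ge> 2" "m \<le> n"
  shows "Dd \<tau> m \<le> Dd \<tau> n"
  using assms(2,1)
proof (induction n rule: dec_induct)
  case base then show ?case by simp
next
  case (step n) then show ?case using Dd_mono_step(1)[of n \<tau>] by force
qed

lemma tails_prod_qq: assumes x: "x \<notin> \<rat>" and that: "bcf_digit x 0 = 1"
  shows "(\<Prod>i\<in>{1..Suc m}. bcf_tail x i) = fst (qq (bcf_digit x) m) * bcf_tail x (Suc m) - snd (qq (bcf_digit x) m)"
    "x * (fst (qq (bcf_digit x) m) * bcf_tail x (Suc m) - snd (qq (bcf_digit x) m))
       = fst (pq (bcf_digit x) m) * bcf_tail x (Suc m) - snd (pq (bcf_digit x) m)"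
proof -
  let ?s = "bcf_tail x"
  have gen: "(b*qa - qb)*u - qa = u * (qa* s - qb)" if "u > 1" "s = b - 1/u" for qa qb b s u :: real
  proof -
    have us: "u * s = b*u - 1" using that by (simp add: field_simps)
    have "u * (qa* s - qb) = qa * (u * s) - qb * u" by (simp add: algebra_simps)
    also have "\<dots> = (b*qa - qb)*u - qa" unfolding us by (simp add: algebra_simps)
    finally show ?thesis by simp
  qed
  have "(\<Prod>i\<in>{1..Suc m}. ?s i) = fst (qq (bcf_digit x) m) * ?s (Suc m) - snd (qq (bcf_digit x) m) \<and>
    x * (fst (qq (bcf_digit x) m) * ?s (Suc m) - snd (qq (bcf_digit x) m))
       = fst (pq (bcf_digit x) m) * ?s (Suc m) - snd (pq (bcf_digit x) m)"
  proof (induction m)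
    case 0
    have "x = 1 - 1 / ?s 1" using tail_rec[OF x, of 0] that by simp
    moreover have "?s 1 > 1" using tail_gt1[OF x, of 0] by simp
    ultimately show ?case by (simp add: field_simps)
  next
    case (Suc m)
    define Q where "Q = real_of_int (fst (qq (bcf_digit x) m))"
    define Q' where "Q' = real_of_int (snd (qq (bcf_digit x) m))"
    define P where "P = real_of_int (fst (pq (bcf_digit x) m))"
    define P' where "P' = real_of_int (snd (pq (bcf_digit x) m))"
    define b where "b = real_of_int (bcf_digit x (Suc m))"
    have r: "?s (Suc m) = b - 1 / ?s (Suc (Suc m))" unfolding b_def using tail_rec[OF x] .
    have g: "?s (Suc (Suc m)) > 1" using tail_gt1[OF x] by simp
    have e1: "(b*Q - Q')*?s (Suc (Suc m)) - Q = ?s (Suc (Suc m)) * (Q*?s (Suc m) - Q')" using gen[OF g r] .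
    have e2: "(b*P - P')*?s (Suc (Suc m)) - P = ?s (Suc (Suc m)) * (P*?s (Suc m) - P')" using gen[OF g r] .
    have IH1: "(\<Prod>i\<in>{1..Suc m}. ?s i) = Q * ?s (Suc m) - Q'" using Suc unfolding Q_def Q'_def by simp
    have IH2: "x * (Q * ?s (Suc m) - Q') = P * ?s (Suc m) - P'" using Suc unfolding Q_def Q'_def P_def P'_def by simp
    have p: "(\<Prod>i\<in>{1..Suc (Suc m)}. ?s i) = (\<Prod>i\<in>{1..Suc m}. ?s i) * ?s (Suc (Suc m))"
      by (simp add: prod.nat_ivl_Suc')
    have A: "real_of_int (fst (qq (bcf_digit x) (Suc m))) = b*Q - Q'" "real_of_int (snd (qq (bcf_digit x) (Suc m))) = Q"
      "real_of_int (fst (pq (bcf_digit x) (Suc m))) = b*P - P'" "real_of_int (snd (pq (bcf_digit x) (Suc m))) = P"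
      unfolding Q_def Q'_def P_def P'_def b_def by simp_all
    show ?case unfolding A
    proof
      show "(\<Prod>i\<in>{1..Suc (Suc m)}. ?s i) = (b * Q - Q') * ?s (Suc (Suc m)) - Q"
        unfolding p IH1 e1 by simp
      have "x * (?s (Suc (Suc m)) * (Q * ?s (Suc m) - Q')) = ?s (Suc (Suc m)) * (x * (Q * ?s (Suc m) - Q'))"
        by (simp add: algebra_simps)
      also have "\<dots> = ?s (Suc (Suc m)) * (P * ?s (Suc m) - P')" using IH2 by simp
      finally show "x * ((b * Q - Q') * ?s (Suc (Suc m)) - Q) = (b * P - P') * ?s (Suc (Suc m)) - P"
        unfolding e1 e2 .
    qed
  qed
  thus "(\<Prod>i\<in>{1..Suc m}. bcf_tail x i) = fst (qq (bcf_digit x) m) * bcf_tail x (Suc m) - snd (qq (bcf_digit x) m)"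
    "x * (fst (qq (bcf_digit x) m) * bcf_tail x (Suc m) - snd (qq (bcf_digit x) m))
       = fst (pq (bcf_digit x) m) * bcf_tail x (Suc m) - snd (pq (bcf_digit x) m)" by auto
qed

lemma digit_ge2: assumes "x \<notin> \<rat>" "n \<ge> 1" shows "bcf_digit x n \<ge> 2"
proof -
  obtain m where "n = Suc m" using assms by (cases n) auto
  hence "bcf_tail x n > 1" using tail_gt1[OF assms(1)] by simp
  thus ?thesis using digit_bounds(2)[OF assms(1), of n] by linarith
qed

lemma approx_conv: assumes x: "0 < x" "x < 1" "x \<notin> \<rat>"
  shows "\<bar>x - of_int (fst (pq (bcf_digit x) m) - snd (pq (bcf_digit x) m)) / of_int (Dd (bcf_digit x) m)\<bar>
     \<le> (bcf_tail x (Suc m) - 1) / (of_int (Dd (bcf_digit x) m))^2"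
    "(\<Prod>i\<in>{1..Suc m}. bcf_tail x i) \<ge> Dd (bcf_digit x) m"
proof -
  have d0: "bcf_digit x 0 = 1" using digit0 x by simp
  define Q where "Q = real_of_int (fst (qq (bcf_digit x) m))"
  define Q' where "Q' = real_of_int (snd (qq (bcf_digit x) m))"
  define P where "P = real_of_int (fst (pq (bcf_digit x) m))"
  define P' where "P' = real_of_int (snd (pq (bcf_digit x) m))"
  define s where "s = bcf_tail x (Suc m)"
  have pos: "Dd (bcf_digit x) m \<ge> 1" "snd (qq (bcf_digit x) m) \<ge> 0" "fst (qq (bcf_digit x) m) \<ge> 1"
    using qq_pos[of m "bcf_digit x"] digit_ge2[OF x(3)] by auto
  have D: "real_of_int (Dd (bcf_digit x) m) = Q - Q'" unfolding Dd_def Q_def Q'_def by simp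
  have s1: "s > 1" unfolding s_def using tail_gt1[OF x(3)] .
  have Q1: "Q \<ge> 1" "Q' \<ge> 0" "Q - Q' \<ge> 1" using pos D unfolding Q_def Q'_def by auto
  have "Q * 1 \<le> Q * s" using Q1 s1 by (intro mult_left_mono) auto
  hence den: "Q * s - Q' \<ge> Q - Q'" by simp
  have e1: "(\<Prod>i\<in>{1..Suc m}. bcf_tail x i) = Q * s - Q'" "x * (Q * s - Q') = P * s - P'"
    using tails_prod_qq[OF x(3) d0] unfolding Q_def Q'_def P_def P'_def s_def by auto
  show "(\<Prod>i\<in>{1..Suc m}. bcf_tail x i) \<ge> Dd (bcf_digit x) m" using e1 den D by simp
  have det: "P * Q' - P' * Q = -1" using det_pq[of "bcf_digit x" m] unfolding P_def P'_def Q_def Q'_def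
    by (metis of_int_diff of_int_minus of_int_mult of_int_1)
  have dpos: "Q * s - Q' > 0" "Q - Q' > 0" using den Q1 by linarith+
  have xe: "x = (P * s - P') / (Q * s - Q')" using e1(2) dpos by (simp add: eq_divide_eq)
  have "x - (P - P')/(Q - Q') = ((P * s - P') * (Q - Q') - (P - P') * (Q * s - Q')) / ((Q * s - Q') * (Q - Q'))"
    unfolding xe using dpos by (simp add: diff_frac_eq)
  also have "(P * s - P') * (Q - Q') - (P - P') * (Q * s - Q') = (s - 1) * (P' * Q - P * Q')"
    by (simp add: algebra_simps)
  also have "P' * Q - P * Q' = 1" using det by simp
  finally have eq: "x - (P - P')/(Q - Q') = (s - 1) / ((Q * s - Q') * (Q - Q'))" by simp
  have "(s - 1) / ((Q * s - Q') * (Q - Q')) > 0" using s1 dpos by simp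
  hence "\<bar>x - (P - P')/(Q - Q')\<bar> = (s - 1) / ((Q * s - Q') * (Q - Q'))" unfolding eq by (rule abs_of_pos)
  also have "\<dots> \<le> (s - 1) / ((Q - Q') * (Q - Q'))"
    using s1 Q1 den dpos by (intro divide_left_mono mult_right_mono mult_pos_pos) auto
  finally show "\<bar>x - of_int (fst (pq (bcf_digit x) m) - snd (pq (bcf_digit x) m)) / of_int (Dd (bcf_digit x) m)\<bar>
     \<le> (bcf_tail x (Suc m) - 1) / (of_int (Dd (bcf_digit x) m))^2"
    unfolding D by (simp add: P_def P'_def s_def power2_eq_square)
qed


definition lf :: "nat list \<Rightarrow> nat \<Rightarrow> int" where
  "lf w i = (if i = 0 then 1 else if i \<le> length w then int (w ! (i - 1)) else 2)"

definition Dq :: "nat list \<Rightarrow> int" where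
  "Dq w = Dd (lf w) (length w)"

definition Lfun :: "real \<Rightarrow> nat list \<Rightarrow> nat \<Rightarrow> nat" where
  "Lfun \<delta> w E = (if 3 \<le> real_of_int (Dq w) powr \<delta> \<and> real E \<le> real_of_int (Dq w) powr \<delta>
     then nat \<lceil>real_of_int (Dq w) powr \<delta>\<rceil> else 0)"

fun st :: "real \<Rightarrow> (nat \<Rightarrow> nat) \<Rightarrow> nat \<Rightarrow> nat list \<times> nat" where
  "st \<delta> \<sigma> 0 = ([], 1)"
| "st \<delta> \<sigma> (Suc n) = (let w' = fst (st \<delta> \<sigma> n) @ [\<sigma> (Suc n)]; L = Lfun \<delta> w' (snd (st \<delta> \<sigma> n))
     in (w' @ replicate L 2, snd (st \<delta> \<sigma> n) * (L + 1)))"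

definition W where "W \<delta> \<sigma> n = fst (st \<delta> \<sigma> n)"
definition EE where "EE \<delta> \<sigma> n = snd (st \<delta> \<sigma> n)"
definition blk where "blk \<delta> \<sigma> n = Lfun \<delta> (W \<delta> \<sigma> n @ [\<sigma> (Suc n)]) (EE \<delta> \<sigma> n)"
definition pp where "pp \<delta> \<sigma> n = length (W \<delta> \<sigma> n)"
definition outs where "outs \<delta> \<sigma> i = (if i = 0 then 1 else W \<delta> \<sigma> i ! (i - 1))"

lemma W_Suc: "W \<delta> \<sigma> (Suc n) = W \<delta> \<sigma> n @ [\<sigma> (Suc n)] @ replicate (blk \<delta> \<sigma> n) 2"
  by (simp add: W_def blk_def EE_def Let_def)

lemma EE_Suc: "EE \<delta> \<sigma> (Suc n) = EE \<delta> \<sigma> n * (blk \<delta> \<sigma> n + 1)"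
  by (simp add: W_def blk_def EE_def Let_def)

lemma W_0: "W \<delta> \<sigma> 0 = []" and EE_0: "EE \<delta> \<sigma> 0 = 1" by (simp_all add: W_def EE_def)

lemma pp_Suc: "pp \<delta> \<sigma> (Suc n) = pp \<delta> \<sigma> n + 1 + blk \<delta> \<sigma> n"
  by (simp add: pp_def W_Suc)

lemma pp_0: "pp \<delta> \<sigma> 0 = 0" by (simp add: pp_def W_0)

lemma pp_ge: "pp \<delta> \<sigma> n \<ge> n"
  by (induction n) (auto simp: pp_Suc pp_0)

lemma pp_mono: "m \<le> n \<Longrightarrow> pp \<delta> \<sigma> m \<le> pp \<delta> \<sigma> n"
proof (induction n rule: dec_induct)
  case base then show ?case by simp
next
  case (step n) then show ?case by (simp add: pp_Suc)
qed

lemma pp_strict: "m < n \<Longrightarrow> pp \<delta> \<sigma> m < pp \<delta> \<sigma> n"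
  using pp_mono[of "Suc m" n \<delta> \<sigma>] by (simp add: pp_Suc)

lemma W_prefix: "m \<le> n \<Longrightarrow> \<exists>v. W \<delta> \<sigma> n = W \<delta> \<sigma> m @ v"
proof (induction n rule: dec_induct)
  case base then show ?case by simp
next
  case (step n) then show ?case by (auto simp: W_Suc)
qed

lemma W_nth: assumes "m \<le> n" "i < pp \<delta> \<sigma> m" shows "W \<delta> \<sigma> n ! i = W \<delta> \<sigma> m ! i"
proof -
  obtain v where "W \<delta> \<sigma> n = W \<delta> \<sigma> m @ v" using W_prefix[OF assms(1)] by blast
  thus ?thesis using assms(2) by (simp add: pp_def nth_append)
qed

lemma outs_eq: assumes "1 \<le> i" "i \<le> pp \<delta> \<sigma> n" shows "outs \<delta> \<sigma> i = W \<delta> \<sigma> n ! (i - 1)"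
proof (cases "i \<le> n")
  case True
  have "i - 1 < pp \<delta> \<sigma> i" using pp_ge[of i \<delta> \<sigma>] assms by simp
  then show ?thesis unfolding outs_def using W_nth[OF True, of "i - 1"] assms by simp
next
  case False
  then show ?thesis unfolding outs_def using W_nth[of n i "i - 1"] assms by simp
qed

lemma outs_input: "outs \<delta> \<sigma> (pp \<delta> \<sigma> n + 1) = \<sigma> (Suc n)"
proof -
  have "outs \<delta> \<sigma> (pp \<delta> \<sigma> n + 1) = W \<delta> \<sigma> (Suc n) ! (pp \<delta> \<sigma> n)"
    using outs_eq[of "pp \<delta> \<sigma> n + 1" \<delta> \<sigma> "Suc n"] by (simp add: pp_Suc)
  thus ?thesis by (simp add: W_Suc pp_def nth_append)
qed

lemma outs_block: assumes "pp \<delta> \<sigma> n + 1 < i" "i \<le> pp \<delta> \<sigma> (Suc n)" shows "outs \<delta> \<sigma> i = 2"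
proof -
  have "outs \<delta> \<sigma> i = W \<delta> \<sigma> (Suc n) ! (i - 1)" using outs_eq[of i \<delta> \<sigma> "Suc n"] assms by simp
  define j where "j = i - 2 - pp \<delta> \<sigma> n"
  have ij: "i - 1 = length (W \<delta> \<sigma> n) + Suc j" using assms unfolding j_def pp_def by simp
  have jl: "j < blk \<delta> \<sigma> n" using assms unfolding j_def by (simp add: pp_Suc)
  have "W \<delta> \<sigma> (Suc n) ! (i - 1) = (\<sigma> (Suc n) # replicate (blk \<delta> \<sigma> n) 2) ! Suc j"
    unfolding ij W_Suc by (simp add: nth_append)
  also have "\<dots> = 2" using jl by simp
  finally show ?thesis using \<open>outs \<delta> \<sigma> i = W \<delta> \<sigma> (Suc n) ! (i - 1)\<close> by simp
qed

lemma outs_cases: assumes "i \<ge> 1" shows "outs \<delta> \<sigma> i = 2 \<or> (\<exists>n. outs \<delta> \<sigma> i = \<sigma> (Suc n) \<and> i = pp \<delta> \<sigma> n + 1)"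
proof -
  have "\<exists>n. pp \<delta> \<sigma> n < i \<and> i \<le> pp \<delta> \<sigma> (Suc n)"
  proof -
    define n where "n = (LEAST n. i \<le> pp \<delta> \<sigma> n)"
    have ex: "i \<le> pp \<delta> \<sigma> i" using pp_ge by simp
    have n1: "i \<le> pp \<delta> \<sigma> n" unfolding n_def using LeastI[of "\<lambda>n. i \<le> pp \<delta> \<sigma> n", OF ex] .
    have "n \<noteq> 0"
    proof
      assume "n = 0" hence "pp \<delta> \<sigma> n = 0" using pp_0 by simp
      thus False using n1 assms by simp
    qed
    then obtain k where k: "n = Suc k" by (cases n) auto
    have "\<not> i \<le> pp \<delta> \<sigma> k" using not_less_Least[of k "\<lambda>n. i \<le> pp \<delta> \<sigma> n"] k unfolding n_def by simp
    hence "pp \<delta> \<sigma> k < i" by simp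
    thus ?thesis using n1 k by blast
  qed
  then obtain n where n: "pp \<delta> \<sigma> n < i" "i \<le> pp \<delta> \<sigma> (Suc n)" by auto
  show ?thesis
  proof (cases "i = pp \<delta> \<sigma> n + 1")
    case True then show ?thesis using outs_input by auto
  next
    case False then show ?thesis using outs_block[of \<delta> \<sigma> n i] n by auto
  qed
qed

lemma st_cong: "(\<forall>i. 1 \<le> i \<and> i \<le> n \<longrightarrow> \<sigma> i = \<sigma>' i) \<Longrightarrow> st \<delta> \<sigma> n = st \<delta> \<sigma>' n"
  by (induction n) (auto simp: Let_def)

lemma Dq_eq: assumes "length w = m" "\<forall>i. 1 \<le> i \<and> i \<le> m \<longrightarrow> \<tau> i = int (w ! (i - 1))"
  shows "Dq w = Dd \<tau> m"
  unfolding Dq_def assms(1) using assms by (intro Dd_cong) (auto simp: lf_def)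

context bset begin

lemma outs_valid: assumes "valid \<sigma>" shows "valid (outs \<delta> \<sigma>)"
  unfolding valid_def
proof
  show "\<forall>n\<ge>1. outs \<delta> \<sigma> n \<in> B"
  proof (intro allI impI)
    fix i :: nat assume i: "i \<ge> 1"
    from outs_cases[OF i, of \<delta> \<sigma>] show "outs \<delta> \<sigma> i \<in> B"
      using twoB assms unfolding valid_def by auto
  qed
  show "\<forall>n. \<exists>m>n. outs \<delta> \<sigma> m \<noteq> 2"
  proof
    fix n
    obtain m where m: "m > n" "\<sigma> m \<noteq> 2" using assms unfolding valid_def by blast
    obtain k where k: "m = Suc k" using m by (cases m) auto
    have "outs \<delta> \<sigma> (pp \<delta> \<sigma> k + 1) = \<sigma> m" using outs_input k by simp
    moreover have "pp \<delta> \<sigma> k + 1 > n" using pp_ge[of k \<delta> \<sigma>] m k by simp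
    ultimately show "\<exists>m>n. outs \<delta> \<sigma> m \<noteq> 2" using m by metis
  qed
qed

end


lemma block_z: assumes y: "y \<notin> \<rat>" and a: "a \<ge> 1"
  and d: "\<forall>i. a \<le> i \<and> i < a + L \<longrightarrow> bcf_digit y i = 2"
  shows "1 / (bcf_tail y a - 1) = 1 / (bcf_tail y (a + L) - 1) + L"
  using a d
proof (induction L arbitrary: a)
  case 0 then show ?case by simp
next
  case (Suc L)
  have r: "bcf_tail y a = 2 - 1 / bcf_tail y (Suc a)" using tail_rec[OF y, of a] Suc.prems by simp
  have g: "bcf_tail y (Suc a) > 1" using tail_gt1[OF y] by simp
  have gen: "\<And>t::real. t > 1 \<Longrightarrow> 1 / ((2 - 1/t) - 1) = 1 / (t - 1) + 1"
    by (simp add: field_simps)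
  have "1 / (bcf_tail y a - 1) = 1 / (bcf_tail y (Suc a) - 1) + 1" unfolding r using gen[OF g] .
  moreover have "1 / (bcf_tail y (Suc a) - 1) = 1 / (bcf_tail y (Suc a + L) - 1) + L"
    using Suc.IH[of "Suc a"] Suc.prems by auto
  ultimately show ?case by simp
qed

lemma block_props: assumes y: "y \<notin> \<rat>" and a: "a \<ge> 1"
  and d: "\<forall>i. a \<le> i \<and> i < a + L \<longrightarrow> bcf_digit y i = 2"
  shows "(\<Prod>i\<in>{a..<a+L}. bcf_tail y i) \<le> real L + 1" "bcf_tail y a \<le> bcf_tail y (a + L)"
    "L \<ge> 1 \<Longrightarrow> bcf_tail y a - 1 < 1 / L"
proof -
  define z where "z i = 1 / (bcf_tail y i - 1)" for i
  have zpos: "z i > 0" if i1: "i \<ge> 1" for i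
  proof -
    obtain j where "i = Suc j" using i1 by (cases i) auto
    thus ?thesis unfolding z_def using tail_gt1[OF y, of j] by simp
  qed
  have sz: "bcf_tail y i = (z i + 1) / z i" if i1: "i \<ge> 1" for i
  proof -
    obtain j where "i = Suc j" using i1 by (cases i) auto
    hence "bcf_tail y i > 1" using tail_gt1[OF y, of j] by simp
    thus ?thesis unfolding z_def by (simp add: field_simps)
  qed
  have za: "z a = z (a + L) + L" using block_z[OF y a d] unfolding z_def .
  have prodeq: "(\<Prod>i\<in>{b..<b+M}. bcf_tail y i) = (z b + 1) / (z (b + M) + 1)"
    if "b \<ge> 1" "\<forall>i. b \<le> i \<and> i < b + M \<longrightarrow> bcf_digit y i = 2" for b M
    using that
  proof (induction M arbitrary: b)
    case 0 then show ?case using zpos[of b] by simp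
  next
    case (Suc M)
    have zb: "z b = z (Suc b) + 1" using block_z[OF y Suc.prems(1), of 1] Suc.prems(2) unfolding z_def by auto
    have "(\<Prod>i\<in>{b..<b+Suc M}. bcf_tail y i) = bcf_tail y b * (\<Prod>i\<in>{Suc b..<Suc b+M}. bcf_tail y i)"
      by (simp add: prod.atLeast_Suc_lessThan)
    also have "(\<Prod>i\<in>{Suc b..<Suc b+M}. bcf_tail y i) = (z (Suc b) + 1) / (z (Suc b + M) + 1)"
      using Suc.IH[of "Suc b"] Suc.prems by auto
    also have "bcf_tail y b = (z b + 1) / (z (Suc b) + 1)" using sz[OF Suc.prems(1)] zb by simp
    finally show ?case using zpos[of "Suc b"] zpos[of "Suc b + M"] by simp
  qed
  have Z: "z (a + L) > 0" using zpos a by simp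
  have "(\<Prod>i\<in>{a..<a+L}. bcf_tail y i) = (z (a + L) + L + 1) / (z (a + L) + 1)"
    using prodeq[OF a d] za by simp
  also have "\<dots> \<le> real L + 1"
  proof -
    have "z (a + L) + L + 1 \<le> (real L + 1) * (z (a + L) + 1)" using Z by (simp add: algebra_simps)
    thus ?thesis using Z by (simp add: divide_le_eq)
  qed
  finally show "(\<Prod>i\<in>{a..<a+L}. bcf_tail y i) \<le> real L + 1" .
  have "bcf_tail y a - 1 = 1 / z a" unfolding z_def by simp
  also have "\<dots> \<le> 1 / z (a + L)" using za Z by (intro divide_left_mono) auto
  also have "\<dots> = bcf_tail y (a + L) - 1" unfolding z_def by simp
  finally show "bcf_tail y a \<le> bcf_tail y (a + L)" by simp
  assume L: "L \<ge> 1"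
  have "bcf_tail y a - 1 = 1 / z a" unfolding z_def by simp
  also have "\<dots> = 1 / (z (a + L) + L)" using za by simp
  also have "\<dots> < 1 / L" using Z L by (intro divide_strict_left_mono) auto
  finally show "bcf_tail y a - 1 < 1 / L" .
qed

locale ins = bset +
  fixes \<delta> :: real
  assumes dpos: "0 < \<delta>" and dle: "\<delta> \<le> 1/4"
begin

definition sx :: "real \<Rightarrow> nat \<Rightarrow> nat" where "sx x n = nat (bcf_digit x n)"

definition gmap :: "real \<Rightarrow> real" where "gmap x = pi_pt (outs \<delta> (sx x))"

lemma sx_valid: assumes x: "x \<in> F_B B" shows "valid (sx x)"
  unfolding valid_def
proof
  show "\<forall>n\<ge>1. sx x n \<in> B" using FB_digit(1)[OF x] unfolding sx_def by auto
  show "\<forall>n. \<exists>m>n. sx x m \<noteq> 2"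
  proof
    fix n obtain m where m: "m > n" "bcf_digit x m \<noteq> 2" using FB_inf_non2[OF x] by blast
    have "m \<ge> 1" using m by simp
    hence "sx x m \<noteq> 2" using m FB_digit(4)[OF x \<open>m \<ge> 1\<close>] unfolding sx_def by auto
    thus "\<exists>m>n. sx x m \<noteq> 2" using m by auto
  qed
qed

lemma gmap_props: assumes x: "x \<in> F_B B"
  shows "gmap x \<in> F_B B" "\<And>n. n \<ge> 1 \<Longrightarrow> bcf_digit (gmap x) n = int (outs \<delta> (sx x) n)"
  using pi_pt_props[OF outs_valid[OF sx_valid[OF x]]] unfolding gmap_def by auto

end


context ins begin

context fixes x assumes x: "x \<in> F_B B" begin

lemma y_FB: "gmap x \<in> F_B B" using gmap_props(1)[OF x] .

lemma y_basic: "0 < gmap x" "gmap x < 1" "gmap x \<notin> \<rat>" using FB_basic[OF y_FB] by auto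

lemma x_basic: "0 < x" "x < 1" "x \<notin> \<rat>" using FB_basic[OF x] by auto

lemma y_dig_input: "bcf_digit (gmap x) (pp \<delta> (sx x) n + 1) = bcf_digit x (Suc n)"
proof -
  have "bcf_digit (gmap x) (pp \<delta> (sx x) n + 1) = int (outs \<delta> (sx x) (pp \<delta> (sx x) n + 1))"
    using gmap_props(2)[OF x] by simp
  also have "\<dots> = int (sx x (Suc n))" using outs_input[of \<delta> "sx x" n] by simp
  also have "\<dots> = bcf_digit x (Suc n)" unfolding sx_def using FB_digit(4)[OF x, of "Suc n"] by simp
  finally show ?thesis .
qed

lemma y_dig_block: "\<forall>i. pp \<delta> (sx x) n + 2 \<le> i \<and> i < pp \<delta> (sx x) n + 2 + blk \<delta> (sx x) n \<longrightarrow> bcf_digit (gmap x) i = 2"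
proof (intro allI impI)
  fix i assume i: "pp \<delta> (sx x) n + 2 \<le> i \<and> i < pp \<delta> (sx x) n + 2 + blk \<delta> (sx x) n"
  have "bcf_digit (gmap x) i = int (outs \<delta> (sx x) i)" using gmap_props(2)[OF x] i by simp
  also have "outs \<delta> (sx x) i = 2" using i by (intro outs_block[where n=n]) (auto simp: pp_Suc)
  finally show "bcf_digit (gmap x) i = 2" by simp
qed

lemma y_step_le: "bcf_tail (gmap x) (pp \<delta> (sx x) n + 2) \<le> bcf_tail (gmap x) (pp \<delta> (sx x) (Suc n) + 1)"
  using block_props(2)[OF y_basic(3) _ y_dig_block[of n]] by (simp add: pp_Suc add.commute add.left_commute)

lemma y_rec_input: "bcf_tail (gmap x) (pp \<delta> (sx x) n + 1) = bcf_digit x (Suc n) - 1 / bcf_tail (gmap x) (pp \<delta> (sx x) n + 2)"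
  using tail_rec[OF y_basic(3), of "pp \<delta> (sx x) n + 1"] y_dig_input[of n] by simp

lemma tails_compare: "bcf_tail (gmap x) (pp \<delta> (sx x) n + 1) \<le> bcf_tail x (Suc n)"
proof (rule ccontr)
  define A where "A n = bcf_tail (gmap x) (pp \<delta> (sx x) n + 1)" for n
  define T where "T n = bcf_tail x (Suc n)" for n
  assume "\<not> ?thesis"
  hence g0: "A n - T n > 0" unfolding A_def T_def by simp
  have T1: "T i \<ge> 1" for i unfolding T_def using FB_tail(1)[OF x, of "Suc i"] by simp
  have propg: "A (Suc m) - T (Suc m) \<ge> (A m - T m) * T (Suc m)" if "A m \<ge> T m" for m
  proof -
    define u where "u = bcf_tail (gmap x) (pp \<delta> (sx x) m + 2)"
    have u1: "u > 1" unfolding u_def using tail_gt1[OF y_basic(3), of "pp \<delta> (sx x) m + 1"] by simp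
    have ra: "A m = bcf_digit x (Suc m) - 1 / u" unfolding A_def u_def using y_rec_input .
    have rt: "T m = bcf_digit x (Suc m) - 1 / T (Suc m)" unfolding T_def using tail_rec[OF x_basic(3)] .
    have e: "1 / T (Suc m) - 1 / u = A m - T m" using ra rt by simp
    have Tp: "T (Suc m) \<ge> 1" using T1 .
    have "u - T (Suc m) = (A m - T m) * (u * T (Suc m))"
    proof -
      have "u - T (Suc m) = (1 / T (Suc m) - 1 / u) * (u * T (Suc m))" using u1 Tp by (simp add: field_simps)
      thus ?thesis using e by simp
    qed
    moreover have "(A m - T m) * (u * T (Suc m)) \<ge> (A m - T m) * (1 * T (Suc m))"
      using that u1 Tp by (intro mult_left_mono mult_right_mono) auto
    moreover have "u \<le> A (Suc m)" unfolding u_def A_def using y_step_le .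
    ultimately show ?thesis by simp
  qed
  have grow: "A (n + k) - T (n + k) \<ge> (A n - T n) * prod T {n<..n + k}" for k
  proof (induction k)
    case 0 then show ?case by simp
  next
    case (Suc k)
    have pnn: "prod T {n<..n + k} \<ge> 1" using T1 by (intro prod_ge_1) auto
    have "A (n + k) - T (n + k) > 0" using Suc g0 pnn
      by (smt (verit) mult_le_cancel_left1)
    hence "A (Suc (n + k)) - T (Suc (n + k)) \<ge> (A (n + k) - T (n + k)) * T (Suc (n + k))" using propg by simp
    moreover have "(A (n + k) - T (n + k)) * T (Suc (n + k)) \<ge> ((A n - T n) * prod T {n<..n + k}) * T (Suc (n + k))"
      using Suc T1 by (intro mult_right_mono) (auto intro: order_trans[OF zero_le_one])
    moreover have "prod T {n<..n + Suc k} = prod T {n<..n + k} * T (Suc (n + k))"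
    proof -
      have "{n<..n + Suc k} = insert (Suc (n + k)) {n<..n + k}" by auto
      thus ?thesis by simp
    qed
    ultimately show ?case by (simp add: mult.assoc)
  qed
  have inf2: "\<forall>m. \<exists>i>m. T i \<ge> 2"
  proof
    fix m obtain i where "i > Suc m" "bcf_tail x i \<ge> 2" using FB_inf_tail2[OF x] by blast
    then obtain j where "i = Suc j" "j > m" by (cases i) auto
    thus "\<exists>i>m. T i \<ge> 2" using \<open>bcf_tail x i \<ge> 2\<close> unfolding T_def by auto
  qed
  obtain k where k: "(1/2::real)^k < (A n - T n) / K" using real_arch_pow_inv[of "(A n - T n) / K" "1/2"] g0 K_ge3 by auto
  have kk: "K < (A n - T n) * 2^k"
  proof -
    have "1 / 2^k < (A n - T n) / K" using k by (simp add: power_one_over)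
    thus ?thesis using K_ge3 by (simp add: field_simps)
  qed
  obtain m where m: "m \<ge> n" "prod T {n<..m} \<ge> 2^k" using prod_unbounded[of n T k] T1 inf2 by auto
  have "A m - T m \<ge> (A n - T n) * prod T {n<..m}" using grow[of "m - n"] m by simp
  moreover have "(A n - T n) * prod T {n<..m} \<ge> (A n - T n) * 2^k" using m g0 by (intro mult_left_mono) auto
  moreover have "A m < K" unfolding A_def using FB_tail(2)[OF y_FB] by simp
  moreover have "T m \<ge> 1" using T1 by simp
  ultimately show False using kk by linarith
qed

end
end


lemma E_alg:
  fixes q E P d :: real
  assumes d: "0 < d" "d \<le> 1/4" and u3: "3 \<le> q powr d" and Eu: "E \<le> q powr d" and qle: "q \<le> 2 * P * E"
    and P1: "P \<ge> 1" and q0: "q > 0" and E0: "E \<ge> 0"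
  shows "E * (real (nat \<lceil>q powr d\<rceil>) + 1) \<le> (2 * P) powr (4 * d)"
proof -
  define u where "u = q powr d"
  have u: "u \<ge> 3" using u3 u_def by simp
  have c: "real (nat \<lceil>u\<rceil>) + 1 \<le> u + 2" using u by linarith
  have "E * (real (nat \<lceil>u\<rceil>) + 1) \<le> u * (u + 2)" using c Eu u E0 unfolding u_def[symmetric]
    by (intro mult_mono) auto
  also have "\<dots> \<le> u * (u * u)"
  proof -
    have "3 * u \<le> u * u" using u by (intro mult_right_mono) auto
    hence "u + 2 \<le> u * u" using u by linarith
    thus ?thesis using u by (intro mult_left_mono) auto
  qed
  also have "u * (u * u) = q powr (3 * d)" unfolding u_def
    by (simp add: powr_add[symmetric] algebra_simps)
  also have "q powr (3 * d) = (q powr (1 - d)) powr (3 * d / (1 - d))"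
    using d by (simp add: powr_powr)
  also have "(q powr (1 - d)) powr (3 * d / (1 - d)) \<le> (2 * P) powr (3 * d / (1 - d))"
  proof (rule powr_mono2)
    show "0 \<le> 3 * d / (1 - d)" using d by simp
    show "0 \<le> q powr (1 - d)" by simp
    have "q powr (1 - d) = q / u" unfolding u_def using q0 by (simp add: powr_diff)
    also have "\<dots> \<le> 2 * P" using qle Eu u P1 unfolding u_def[symmetric]
      by (simp add: divide_le_eq) (smt (verit) mult_left_mono)
    finally show "q powr (1 - d) \<le> 2 * P" .
  qed
  also have "\<dots> \<le> (2 * P) powr (4 * d)"
    using d P1 by (intro powr_mono) (auto simp: field_simps)
  finally show ?thesis unfolding u_def .
qed

context ins begin
context fixes x assumes x: "x \<in> F_B B" begin

lemma t_ge1: "i \<ge> 1 \<Longrightarrow> bcf_tail x i \<ge> 1" using FB_tail(1)[OF x] by (simp add: less_imp_le)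
lemma s_ge1: "i \<ge> 1 \<Longrightarrow> bcf_tail (gmap x) i \<ge> 1" using FB_tail(1)[OF y_FB[OF x]] by (simp add: less_imp_le)

lemma Pt_ge1: "(\<Prod>j\<in>{1..<Suc n}. bcf_tail x j) \<ge> 1"
  using t_ge1 by (intro prod_ge_1) auto

lemma Ps_ge1: "(\<Prod>j\<in>{1..<Suc n}. bcf_tail (gmap x) j) \<ge> 1"
  using s_ge1 by (intro prod_ge_1) auto

lemma prod_compare: "(\<Prod>i\<in>{1..<Suc (pp \<delta> (sx x) n)}. bcf_tail (gmap x) i) \<le> (\<Prod>j\<in>{1..<Suc n}. bcf_tail x j) * real (EE \<delta> (sx x) n)"
proof (induction n)
  case 0 then show ?case by (simp add: pp_0 EE_0)
next
  case (Suc n)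
  define p where "p = pp \<delta> (sx x) n"
  define L where "L = blk \<delta> (sx x) n"
  let ?s = "bcf_tail (gmap x)" and ?t = "bcf_tail x"
  have ppS: "pp \<delta> (sx x) (Suc n) = p + 1 + L" unfolding p_def L_def by (simp add: pp_Suc)
  have split: "(\<Prod>i\<in>{1..<Suc (p + 1 + L)}. ?s i) = (\<Prod>i\<in>{1..<Suc p}. ?s i) * ?s (Suc p) * (\<Prod>i\<in>{p+2..<p+2+L}. ?s i)"
  proof -
    have "(\<Prod>i\<in>{1..<Suc (p + 1 + L)}. ?s i) = (\<Prod>i\<in>{1..<Suc (Suc p)}. ?s i) * (\<Prod>i\<in>{Suc (Suc p)..<Suc (p + 1 + L)}. ?s i)"
      by (rule prod.atLeastLessThan_concat[symmetric]) auto
    moreover have "(\<Prod>i\<in>{1..<Suc (Suc p)}. ?s i) = (\<Prod>i\<in>{1..<Suc p}. ?s i) * ?s (Suc p)"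
      by (simp add: prod.atLeastLessThan_Suc)
    moreover have "{Suc (Suc p)..<Suc (p + 1 + L)} = {p+2..<p+2+L}" by auto
    ultimately show ?thesis by simp
  qed
  have b1: "(\<Prod>i\<in>{p+2..<p+2+L}. ?s i) \<le> real L + 1"
    using block_props(1)[OF y_basic(3)[OF x] _ y_dig_block[OF x, of n]] unfolding p_def L_def by simp
  have b2: "?s (Suc p) \<le> ?t (Suc n)" using tails_compare[OF x, of n] unfolding p_def by simp
  have nn1: "(\<Prod>i\<in>{1..<Suc p}. ?s i) \<ge> 0" using Ps_ge1 by (smt (verit))
  have nn2: "?s (Suc p) \<ge> 0" using s_ge1[of "Suc p"] by simp
  have nn3: "(\<Prod>i\<in>{p+2..<p+2+L}. ?s i) \<ge> 0" using s_ge1 by (intro prod_nonneg) (auto intro: order_trans[OF zero_le_one])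
  have "(\<Prod>i\<in>{1..<Suc (pp \<delta> (sx x) (Suc n))}. ?s i) = (\<Prod>i\<in>{1..<Suc p}. ?s i) * ?s (Suc p) * (\<Prod>i\<in>{p+2..<p+2+L}. ?s i)"
    unfolding ppS split ..
  also have "\<dots> \<le> ((\<Prod>j\<in>{1..<Suc n}. ?t j) * real (EE \<delta> (sx x) n)) * ?t (Suc n) * (real L + 1)"
    using Suc.IH b1 b2 nn1 nn2 nn3 unfolding p_def[symmetric]
    by (intro mult_mono) (auto intro: mult_nonneg_nonneg)
  also have "\<dots> = (\<Prod>j\<in>{1..<Suc (Suc n)}. ?t j) * real (EE \<delta> (sx x) (Suc n))"
    unfolding EE_Suc L_def by (simp add: prod.atLeastLessThan_Suc algebra_simps)
  finally show ?case .
qed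

end
end


context ins begin
context fixes x assumes x: "x \<in> F_B B" begin

lemma q_eq: "real_of_int (Dq (W \<delta> (sx x) n @ [sx x (Suc n)])) = real_of_int (Dd (bcf_digit (gmap x)) (pp \<delta> (sx x) n + 1))"
    "Dd (bcf_digit (gmap x)) (pp \<delta> (sx x) n + 1) \<ge> 1"
proof -
  let ?w = "W \<delta> (sx x) n @ [sx x (Suc n)]"
  have "Dq ?w = Dd (bcf_digit (gmap x)) (pp \<delta> (sx x) n + 1)"
  proof (rule Dq_eq)
    show "length ?w = pp \<delta> (sx x) n + 1" by (simp add: pp_def)
    show "\<forall>i. 1 \<le> i \<and> i \<le> pp \<delta> (sx x) n + 1 \<longrightarrow> bcf_digit (gmap x) i = int (?w ! (i - 1))"
    proof (intro allI impI)
      fix i assume i: "1 \<le> i \<and> i \<le> pp \<delta> (sx x) n + 1"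
      have "bcf_digit (gmap x) i = int (outs \<delta> (sx x) i)" using gmap_props(2)[OF x] i by simp
      also have "outs \<delta> (sx x) i = W \<delta> (sx x) (Suc n) ! (i - 1)" using i by (intro outs_eq) (auto simp: pp_Suc)
      also have "\<dots> = ?w ! (i - 1)" unfolding W_Suc using i by (simp add: nth_append pp_def)
      finally show "bcf_digit (gmap x) i = int (?w ! (i - 1))" .
    qed
  qed
  thus "real_of_int (Dq ?w) = real_of_int (Dd (bcf_digit (gmap x)) (pp \<delta> (sx x) n + 1))" by simp
  show "Dd (bcf_digit (gmap x)) (pp \<delta> (sx x) n + 1) \<ge> 1"
    using qq_pos(1) digit_ge2[OF y_basic(3)[OF x]] by blast
qed

lemma E_bound: "real (EE \<delta> (sx x) n) \<le> (2 * (\<Prod>j\<in>{1..<Suc n}. bcf_tail x j)) powr (4 * \<delta>)"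
proof (induction n)
  case 0 show ?case by (simp add: EE_0 ge_one_powr_ge_zero dpos less_imp_le)
next
  case (Suc n)
  let ?s = "bcf_tail (gmap x)" and ?t = "bcf_tail x"
  define P where "P = (\<Prod>j\<in>{1..<Suc n}. ?t j)"
  define P' where "P' = (\<Prod>j\<in>{1..<Suc (Suc n)}. ?t j)"
  have PP': "P' = P * ?t (Suc n)" unfolding P_def P'_def by (simp add: prod.atLeastLessThan_Suc)
  have P1: "P \<ge> 1" unfolding P_def using Pt_ge1[OF x] .
  have P'1: "P' \<ge> 1" unfolding P'_def using Pt_ge1[OF x] .
  have PleP': "P \<le> P'" unfolding PP' using P1 t_ge1[OF x, of "Suc n"] by (simp add: mult_le_cancel_left1 less_imp_le)
  define L where "L = blk \<delta> (sx x) n"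
  define E where "E = real (EE \<delta> (sx x) n)"
  have IH: "E \<le> (2 * P) powr (4 * \<delta>)" using Suc.IH unfolding E_def P_def .
  have ES: "real (EE \<delta> (sx x) (Suc n)) = E * (real L + 1)" unfolding EE_Suc E_def L_def by (simp add: algebra_simps)
  show ?case
  proof (cases "L = 0")
    case True
    have "E \<le> (2 * P') powr (4 * \<delta>)" using IH PleP' P1 dpos
      by (smt (verit) powr_mono2)
    then show ?thesis using ES True unfolding P'_def by simp
  next
    case False
    define w where "w = W \<delta> (sx x) n @ [sx x (Suc n)]"
    define q where "q = real_of_int (Dq w)"
    have Lq: "L = (if 3 \<le> q powr \<delta> \<and> E \<le> q powr \<delta> then nat \<lceil>q powr \<delta>\<rceil> else 0)"
      unfolding L_def blk_def Lfun_def q_def w_def E_def ..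
    have cond: "3 \<le> q powr \<delta>" "E \<le> q powr \<delta>" and Lv: "L = nat \<lceil>q powr \<delta>\<rceil>"
      using False Lq by (auto split: if_splits)
    define p where "p = pp \<delta> (sx x) n"
    have qD: "q = real_of_int (Dd (bcf_digit (gmap x)) (p + 1))" "q \<ge> 1"
      using q_eq[of n] unfolding q_def w_def p_def by auto
    have a2: "(\<Prod>i\<in>{1..Suc (p + 1)}. ?s i) \<ge> q"
      using approx_conv(2)[OF y_basic[OF x], of "p + 1"] qD by simp
    have split: "(\<Prod>i\<in>{1..Suc (p + 1)}. ?s i) = (\<Prod>i\<in>{1..<Suc p}. ?s i) * ?s (Suc p) * ?s (p + 2)"
    proof -
      have "{1..Suc (p + 1)} = {1..<Suc (Suc (Suc p))}" by auto
      thus ?thesis by (simp add: prod.atLeastLessThan_Suc)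
    qed
    have d2: "bcf_digit (gmap x) (p + 2) = 2" using y_dig_block[OF x, of n] False unfolding p_def L_def by auto
    have s2: "?s (p + 2) < 2" using FB_tail(3)[OF y_FB[OF x], of "p + 2"] d2 by simp
    have pc: "(\<Prod>i\<in>{1..<Suc p}. ?s i) \<le> P * E" using prod_compare[OF x, of n] unfolding P_def E_def p_def .
    have tc: "?s (Suc p) \<le> ?t (Suc n)" using tails_compare[OF x, of n] unfolding p_def by simp
    have nn: "(\<Prod>i\<in>{1..<Suc p}. ?s i) \<ge> 0" "?s (Suc p) \<ge> 0" "?s (p + 2) \<ge> 0"
      using Ps_ge1[OF x, of p] s_ge1[OF x, of "Suc p"] s_ge1[OF x, of "p + 2"] by auto
    have "q \<le> (P * E) * ?t (Suc n) * 2"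
    proof -
      have "(\<Prod>i\<in>{1..<Suc p}. ?s i) * ?s (Suc p) * ?s (p + 2) \<le> (P * E) * ?t (Suc n) * 2"
        using pc tc s2 nn by (intro mult_mono) (auto intro: mult_nonneg_nonneg)
      thus ?thesis using a2 unfolding split by linarith
    qed
    hence qle: "q \<le> 2 * P' * E" unfolding PP' by (simp add: algebra_simps)
    have "E * (real (nat \<lceil>q powr \<delta>\<rceil>) + 1) \<le> (2 * P') powr (4 * \<delta>)"
      using E_alg[OF dpos dle cond(1) cond(2) qle P'1] qD(2) unfolding E_def by simp
    then show ?thesis using ES Lv unfolding P'_def by simp
  qed
qed

end
end


lemma H_alg:
  fixes dx dy Pi K d :: real
  assumes Pi: "Pi \<ge> 1" and K: "K \<ge> 1" and d: "0 < d" "d \<le> 1/4"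
    and dx: "dx \<le> K / Pi" and dy: "dy \<ge> 1 / (4 * K * Pi powr (1 + 4 * d))"
  shows "dx \<le> 4 * K^2 * dy powr (1 / (1 + 4 * d))"
proof -
  define a where "a = 1 / (1 + 4 * d)"
  have a: "0 < a" "a \<le> 1" unfolding a_def using d by auto
  have pos: "4 * K * Pi powr (1 + 4 * d) > 0" using K Pi by simp
  have "(1 / (4 * K * Pi powr (1 + 4 * d))) powr a \<le> dy powr a"
    using dy pos a by (intro powr_mono2) auto
  moreover have "(1 / (4 * K * Pi powr (1 + 4 * d))) powr a = 1 / ((4 * K) powr a * Pi)"
  proof -
    have "(1 / (4 * K * Pi powr (1 + 4 * d))) powr a = 1 / ((4 * K) powr a * (Pi powr (1 + 4 * d)) powr a)"
      using K Pi by (simp add: powr_divide powr_mult)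
    also have "(Pi powr (1 + 4 * d)) powr a = Pi" unfolding a_def using Pi d
      by (simp add: powr_powr)
    finally show ?thesis .
  qed
  ultimately have h: "1 / ((4 * K) powr a * Pi) \<le> dy powr a" by simp
  have "(4 * K) powr a \<le> (4 * K) powr 1" using K a by (intro powr_mono) auto
  hence ka: "(4 * K) powr a \<le> 4 * K" using K by simp
  have kapos: "(4 * K) powr a > 0" using K by simp
  have "1 / Pi = (4 * K) powr a * (1 / ((4 * K) powr a * Pi))" using kapos Pi by (simp add: field_simps)
  also have "\<dots> \<le> (4 * K) * dy powr a" using h ka kapos K Pi by (intro mult_mono) auto
  finally have "1 / Pi \<le> 4 * K * dy powr a" .
  hence "K * (1 / Pi) \<le> K * (4 * K * dy powr a)" using K by (intro mult_left_mono) auto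
  thus ?thesis using dx unfolding a_def by (simp add: power2_eq_square algebra_simps)
qed

context bset begin

lemma sep: assumes x: "x \<in> F_B B" and y: "y \<in> F_B B" and N: "N \<ge> 1"
  and ne: "bcf_digit x N \<noteq> bcf_digit y N"
  shows "\<bar>bcf_tail x N - bcf_tail y N\<bar> \<ge> 1 / K" "\<bar>bcf_tail x N - bcf_tail y N\<bar> \<le> K"
proof -
  have gen: "bcf_tail b N - bcf_tail a N > 1 / K" if a: "a \<in> F_B B" and b: "b \<in> F_B B"
    and lt: "bcf_digit a N < bcf_digit b N" for a b
  proof -
    have aq: "a \<notin> \<rat>" using FB_basic a by auto
    have r: "bcf_tail a N = bcf_digit a N - 1 / bcf_tail a (Suc N)" using tail_rec[OF aq] .
    have tK: "bcf_tail a (Suc N) < K" "bcf_tail a (Suc N) > 0" using FB_tail[OF a, of "Suc N"] by auto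
    have "1 / K < 1 / bcf_tail a (Suc N)" using tK by (intro divide_strict_left_mono) auto
    hence "bcf_tail a N < bcf_digit a N - 1 / K" using r by simp
    moreover have "bcf_tail b N > bcf_digit b N - 1" using FB_tail(4)[OF b N] .
    moreover have "real_of_int (bcf_digit a N) \<le> real_of_int (bcf_digit b N) - 1" using lt by simp
    ultimately show ?thesis by linarith
  qed
  show "\<bar>bcf_tail x N - bcf_tail y N\<bar> \<ge> 1 / K"
  proof (cases "bcf_digit x N < bcf_digit y N")
    case True then show ?thesis using gen[OF x y] by fastforce
  next
    case False
    hence "bcf_digit y N < bcf_digit x N" using ne by simp
    then show ?thesis using gen[OF y x] by fastforce
  qed
  show "\<bar>bcf_tail x N - bcf_tail y N\<bar> \<le> K" using FB_tail[OF x N] FB_tail[OF y N] by auto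
qed

end

context ins begin

lemma holder: assumes x: "x \<in> F_B B" and x': "x' \<in> F_B B"
  shows "\<bar>x - x'\<bar> \<le> 4 * (real K)^2 * \<bar>gmap x - gmap x'\<bar> powr (1 / (1 + 4 * \<delta>))"
proof (cases "\<forall>n\<ge>1. bcf_digit x n = bcf_digit x' n")
  case True
  then show ?thesis using FB_unique[OF x x'] by simp
next
  case False
  define n1 where "n1 = (LEAST n. n \<ge> 1 \<and> bcf_digit x n \<noteq> bcf_digit x' n)"
  have n1: "n1 \<ge> 1" "bcf_digit x n1 \<noteq> bcf_digit x' n1"
    using LeastI_ex[of "\<lambda>n. n \<ge> 1 \<and> bcf_digit x n \<noteq> bcf_digit x' n"] False unfolding n1_def by auto
  obtain n where n: "n1 = Suc n" using n1 by (cases n1) auto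
  have agree: "bcf_digit x i = bcf_digit x' i" if "1 \<le> i" "i \<le> n" for i
    using not_less_Least[of i "\<lambda>n. n \<ge> 1 \<and> bcf_digit x n \<noteq> bcf_digit x' n"] that n unfolding n1_def by auto
  let ?\<sigma> = "sx x" and ?\<sigma>' = "sx x'"
  have sagree: "\<forall>i. 1 \<le> i \<and> i \<le> n \<longrightarrow> ?\<sigma> i = ?\<sigma>' i" using agree unfolding sx_def by auto
  have st_eq: "st \<delta> ?\<sigma> n = st \<delta> ?\<sigma>' n" using st_cong[OF sagree] .
  have W_eq: "W \<delta> ?\<sigma> n = W \<delta> ?\<sigma>' n" and E_eq: "EE \<delta> ?\<sigma> n = EE \<delta> ?\<sigma>' n" and p_eq: "pp \<delta> ?\<sigma> n = pp \<delta> ?\<sigma>' n"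
    using st_eq by (simp_all add: W_def EE_def pp_def)
  define p where "p = pp \<delta> ?\<sigma> n"
  define y where "y = gmap x"
  define y' where "y' = gmap x'"
  have yF: "y \<in> F_B B" "y' \<in> F_B B" unfolding y_def y'_def using y_FB x x' by auto
  have yagree: "bcf_digit y i = bcf_digit y' i" if "1 \<le> i" "i < p + 1" for i
  proof -
    have "bcf_digit y i = int (outs \<delta> ?\<sigma> i)" unfolding y_def using gmap_props(2)[OF x] that by simp
    also have "outs \<delta> ?\<sigma> i = W \<delta> ?\<sigma> n ! (i - 1)" using that unfolding p_def by (intro outs_eq) auto
    also have "\<dots> = outs \<delta> ?\<sigma>' i"
    proof -
      have "outs \<delta> ?\<sigma>' i = W \<delta> ?\<sigma>' n ! (i - 1)" using that p_eq unfolding p_def by (intro outs_eq) auto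
      thus ?thesis using W_eq by simp
    qed
    also have "int \<dots> = bcf_digit y' i" unfolding y'_def using gmap_props(2)[OF x'] that by simp
    finally show ?thesis .
  qed
  have ydiff: "bcf_digit y (p + 1) \<noteq> bcf_digit y' (p + 1)"
    using y_dig_input[OF x, of n] y_dig_input[OF x', of n] n1 n p_eq unfolding y_def y'_def p_def by simp
  let ?s = "bcf_tail y" and ?s' = "bcf_tail y'" and ?t = "bcf_tail x" and ?t' = "bcf_tail x'"
  have dy: "y - y' = (?s (p + 1) - ?s' (p + 1)) / (\<Prod>i\<in>{1..p + 1}. ?s i * ?s' i)"
    using dist_formula[of y y' "p + 1"] FB_basic[OF yF(1)] FB_basic[OF yF(2)] yagree by auto
  have dx: "x - x' = (?t (Suc n) - ?t' (Suc n)) / (\<Prod>i\<in>{1..Suc n}. ?t i * ?t' i)"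
    using dist_formula[of x x' "Suc n"] FB_basic[OF x] FB_basic[OF x'] agree by auto
  define a where "a = (\<Prod>j\<in>{1..<Suc (Suc n)}. ?t j)"
  define b where "b = (\<Prod>j\<in>{1..<Suc (Suc n)}. ?t' j)"
  define E where "E = real (EE \<delta> ?\<sigma> n)"
  have a1: "a \<ge> 1" "b \<ge> 1" unfolding a_def b_def using Pt_ge1[OF x, of "Suc n"] Pt_ge1[OF x', of "Suc n"] by auto
  have ivl: "{1..Suc n} = {1..<Suc (Suc n)}" "{1..p + 1} = {1..<Suc (Suc p)}" by auto
  have prod_s: "(\<Prod>i\<in>{1..p + 1}. ?s i) \<le> a * E" "(\<Prod>i\<in>{1..p + 1}. ?s' i) \<le> b * E"
  proof -
    have gen: "(\<Prod>i\<in>{1..pp \<delta> (sx z) n + 1}. bcf_tail (gmap z) i) \<le> (\<Prod>j\<in>{1..<Suc (Suc n)}. bcf_tail z j) * real (EE \<delta> (sx z) n)"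
      if z: "z \<in> F_B B" for z
    proof -
      have sp: "(\<Prod>i\<in>{1..pp \<delta> (sx z) n + 1}. bcf_tail (gmap z) i) = (\<Prod>i\<in>{1..<Suc (pp \<delta> (sx z) n)}. bcf_tail (gmap z) i) * bcf_tail (gmap z) (Suc (pp \<delta> (sx z) n))"
      proof -
        have "{1..pp \<delta> (sx z) n + 1} = {1..<Suc (Suc (pp \<delta> (sx z) n))}" by auto
        thus ?thesis by (simp add: prod.atLeastLessThan_Suc)
      qed
      have c1: "(\<Prod>i\<in>{1..<Suc (pp \<delta> (sx z) n)}. bcf_tail (gmap z) i) \<le> (\<Prod>j\<in>{1..<Suc n}. bcf_tail z j) * real (EE \<delta> (sx z) n)"
        using prod_compare[OF z] .
      have c2: "bcf_tail (gmap z) (Suc (pp \<delta> (sx z) n)) \<le> bcf_tail z (Suc n)" using tails_compare[OF z, of n] by simp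
      have nn: "0 \<le> (\<Prod>i\<in>{1..<Suc (pp \<delta> (sx z) n)}. bcf_tail (gmap z) i)" "0 \<le> bcf_tail (gmap z) (Suc (pp \<delta> (sx z) n))"
        using Ps_ge1[OF z, of "pp \<delta> (sx z) n"] s_ge1[OF z, of "Suc (pp \<delta> (sx z) n)"] by linarith+
      have "(\<Prod>i\<in>{1..pp \<delta> (sx z) n + 1}. bcf_tail (gmap z) i) \<le> ((\<Prod>j\<in>{1..<Suc n}. bcf_tail z j) * real (EE \<delta> (sx z) n)) * bcf_tail z (Suc n)"
        unfolding sp using c1 c2 nn by (intro mult_mono) auto
      thus ?thesis by (simp add: prod.atLeastLessThan_Suc algebra_simps)
    qed
    show "(\<Prod>i\<in>{1..p + 1}. ?s i) \<le> a * E" using gen[OF x] unfolding p_def a_def E_def y_def .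
    show "(\<Prod>i\<in>{1..p + 1}. ?s' i) \<le> b * E" using gen[OF x'] p_eq E_eq unfolding p_def b_def E_def y'_def by simp
  qed
  have Ea: "E \<le> (2 * a) powr (4 * \<delta>)" "E \<le> (2 * b) powr (4 * \<delta>)"
  proof -
    have ge: "(\<Prod>j\<in>{1..<Suc n}. bcf_tail z j) \<le> (\<Prod>j\<in>{1..<Suc (Suc n)}. bcf_tail z j)" if z: "z \<in> F_B B" for z
      using Pt_ge1[OF z, of n] t_ge1[OF z, of "Suc n"] by (simp add: prod.atLeastLessThan_Suc mult_le_cancel_left1)
    have "E \<le> (2 * (\<Prod>j\<in>{1..<Suc n}. ?t j)) powr (4 * \<delta>)" using E_bound[OF x] unfolding E_def .
    also have "\<dots> \<le> (2 * a) powr (4 * \<delta>)" unfolding a_def using ge[OF x] Pt_ge1[OF x, of n] dpos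
      by (intro powr_mono2) auto
    finally show "E \<le> (2 * a) powr (4 * \<delta>)" .
    have "E \<le> (2 * (\<Prod>j\<in>{1..<Suc n}. ?t' j)) powr (4 * \<delta>)" using E_bound[OF x'] E_eq unfolding E_def by simp
    also have "\<dots> \<le> (2 * b) powr (4 * \<delta>)" unfolding b_def using ge[OF x'] Pt_ge1[OF x', of n] dpos
      by (intro powr_mono2) auto
    finally show "E \<le> (2 * b) powr (4 * \<delta>)" .
  qed
  define Pi where "Pi = a * b"
  have "1 * 1 \<le> a * b" using a1 by (intro mult_mono) auto
  hence Pi1: "Pi \<ge> 1" unfolding Pi_def by simp
  have E0: "E \<ge> 0" unfolding E_def by simp
  have EE2: "E * E \<le> 4 * Pi powr (4 * \<delta>)"
  proof -
    have "E * E \<le> (2 * a) powr (4 * \<delta>) * (2 * b) powr (4 * \<delta>)" using Ea E0 by (intro mult_mono) auto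
    also have "\<dots> = 4 powr (4 * \<delta>) * Pi powr (4 * \<delta>)" unfolding Pi_def using a1
      by (simp add: powr_mult[symmetric] algebra_simps)
    also have "4 powr (4 * \<delta>) \<le> 4 powr (1::real)" using dpos dle
      by (intro powr_mono) auto
    hence "4 powr (4 * \<delta>) \<le> 4" by simp
    hence "4 powr (4 * \<delta>) * Pi powr (4 * \<delta>) \<le> 4 * Pi powr (4 * \<delta>)" by (intro mult_right_mono) auto
    finally show ?thesis .
  qed
  have prodss: "(\<Prod>i\<in>{1..p + 1}. ?s i * ?s' i) \<le> 4 * Pi powr (1 + 4 * \<delta>)"
  proof -
    have "(\<Prod>i\<in>{1..p + 1}. ?s i * ?s' i) = (\<Prod>i\<in>{1..p + 1}. ?s i) * (\<Prod>i\<in>{1..p + 1}. ?s' i)"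
      by (simp add: prod.distrib)
    also have "\<dots> \<le> (a * E) * (b * E)"
    proof -
      have nnA: "0 \<le> a * E" using a1 E0 by simp
      have nnB: "0 \<le> (\<Prod>i\<in>{1..p + 1}. ?s' i)" using FB_tail(1)[OF yF(2)]
        by (intro prod_nonneg) (auto intro: less_imp_le order_trans[OF zero_le_one])
      show ?thesis using prod_s nnA nnB by (intro mult_mono) auto
    qed
    also have "\<dots> = Pi * (E * E)" unfolding Pi_def by (simp add: algebra_simps)
    also have "\<dots> \<le> Pi * (4 * Pi powr (4 * \<delta>))" using EE2 Pi1 by (intro mult_left_mono) auto
    also have "\<dots> = 4 * Pi powr (1 + 4 * \<delta>)" using Pi1 by (simp add: powr_add)
    finally show ?thesis .
  qed
  have ppos: "(\<Prod>i\<in>{1..p + 1}. ?s i * ?s' i) > 0"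
  proof (intro prod_pos)
    fix i assume "i \<in> {1..p + 1}"
    hence "?s i > 1" "?s' i > 1" using FB_tail(1)[OF yF(1)] FB_tail(1)[OF yF(2)] by auto
    thus "?s i * ?s' i > 0" by simp
  qed
  have sepy: "\<bar>?s (p + 1) - ?s' (p + 1)\<bar> \<ge> 1 / K" using sep(1)[OF yF _ ydiff] by simp
  have dyb: "\<bar>y - y'\<bar> \<ge> 1 / (4 * real K * Pi powr (1 + 4 * \<delta>))"
  proof -
    have "\<bar>y - y'\<bar> = \<bar>?s (p + 1) - ?s' (p + 1)\<bar> / (\<Prod>i\<in>{1..p + 1}. ?s i * ?s' i)"
      unfolding dy using ppos by (simp add: abs_divide)
    also have "\<dots> \<ge> (1 / K) / (4 * Pi powr (1 + 4 * \<delta>))"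
      using sepy prodss ppos K_ge3 by (intro frac_le) auto
    finally show ?thesis by (simp add: field_simps)
  qed
  have xpos: "(\<Prod>i\<in>{1..Suc n}. ?t i * ?t' i) = Pi" unfolding Pi_def a_def b_def ivl by (simp add: prod.distrib)
  have dxb: "\<bar>x - x'\<bar> \<le> real K / Pi"
  proof -
    have "\<bar>x - x'\<bar> = \<bar>?t (Suc n) - ?t' (Suc n)\<bar> / Pi" unfolding dx xpos using Pi1 by (simp add: abs_divide)
    also have "\<dots> \<le> real K / Pi" using sep(2)[OF x x' _ ] n1 n Pi1 by (intro divide_right_mono) auto
    finally show ?thesis .
  qed
  show ?thesis using H_alg[OF Pi1 _ dpos dle dxb dyb] K_ge3 unfolding y_def y'_def by simp
qed

end


lemma reduce_frac: fixes p0 q0 :: int assumes "q0 > 0"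
  shows "\<exists>p q. q > 0 \<and> coprime p q \<and> q \<le> q0 \<and> real_of_int p / real_of_int q = real_of_int p0 / real_of_int q0"
proof -
  define g where "g = gcd p0 q0"
  have g: "g > 0" unfolding g_def using assms by simp
  define p where "p = p0 div g"
  define q where "q = q0 div g"
  have p0: "p0 = p * g" unfolding p_def g_def by simp
  have q0: "q0 = q * g" unfolding q_def g_def by simp
  have cop: "coprime p q" unfolding p_def q_def g_def using assms by (intro div_gcd_coprime) auto
  have qpos: "q > 0" using q0 g assms by (auto simp: zero_less_mult_iff)
  have "q * 1 \<le> q * g" using qpos g by (intro mult_left_mono) auto
  hence qle: "q \<le> q0" using q0 by simp
  have "real_of_int p0 / real_of_int q0 = (real_of_int p * real_of_int g) / (real_of_int q * real_of_int g)"
    unfolding p0 q0 by simp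
  also have "\<dots> = real_of_int p / real_of_int q" using g by simp
  finally show ?thesis using qpos cop qle by auto
qed

context ins begin
context fixes x assumes x: "x \<in> F_B B" begin

definition qn :: "nat \<Rightarrow> int" where "qn n = Dd (bcf_digit (gmap x)) (pp \<delta> (sx x) n + 1)"

lemma ydig2: "\<forall>i. 1 \<le> i \<and> i \<le> m \<longrightarrow> bcf_digit (gmap x) i \<ge> 2"
  using digit_ge2[OF y_basic(3)[OF x]] by auto

lemma qn_mono1: "qn n \<le> qn (Suc n)"
  unfolding qn_def using ydig2 by (intro Dd_mono) (auto simp: pp_Suc)

lemma qn_mono: "n \<le> m \<Longrightarrow> qn n \<le> qn m"
  using lift_Suc_mono_le[of qn, OF qn_mono1] by blast

lemma qn_step: assumes "bcf_digit x (Suc (Suc n)) \<ge> 3" shows "qn n + 1 \<le> qn (Suc n)"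
proof -
  let ?\<tau> = "bcf_digit (gmap x)"
  have "qn n \<le> Dd ?\<tau> (pp \<delta> (sx x) (Suc n))" unfolding qn_def using ydig2 by (intro Dd_mono) (auto simp: pp_Suc)
  moreover have "Dd ?\<tau> (pp \<delta> (sx x) (Suc n)) + 1 \<le> Dd ?\<tau> (Suc (pp \<delta> (sx x) (Suc n)))"
    using Dd_mono_step(2)[of "pp \<delta> (sx x) (Suc n)" ?\<tau>] ydig2 y_dig_input[OF x, of "Suc n"] assms by auto
  ultimately show ?thesis unfolding qn_def by simp
qed

lemma qn_unbounded: "\<exists>n. qn n \<ge> k"
proof (induction k rule: int_induct[where k = 1])
  case base
  have "qn 0 \<ge> 1" unfolding qn_def using qq_pos(1) ydig2 by blast
  thus ?case by blast
next
  case (step1 k)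
  then obtain n where n: "qn n \<ge> k" by blast
  obtain m where m: "m > Suc n" "bcf_digit x m \<noteq> 2" using FB_inf_non2[OF x] by blast
  obtain j where j: "m = Suc (Suc j)" "j \<ge> n" using m by (cases m; cases "m - 1") auto
  have "bcf_digit x m \<ge> 3" using FB_digit(2)[OF x, of m] m by simp
  hence "qn j + 1 \<le> qn (Suc j)" using qn_step j by simp
  moreover have "qn n \<le> qn j" using qn_mono j by simp
  ultimately show ?case using n by (intro exI[of _ "Suc j"]) simp
next
  case (step2 k)
  then obtain n where "qn n \<ge> k" by blast
  thus ?case by (intro exI[of _ n]) simp
qed

lemma qn_pos: "qn n \<ge> 1" unfolding qn_def using qq_pos(1) ydig2 by blast

lemma blk_eq: "blk \<delta> (sx x) n = (if 3 \<le> real_of_int (qn n) powr \<delta> \<and> real (EE \<delta> (sx x) n) \<le> real_of_int (qn n) powr \<delta>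
     then nat \<lceil>real_of_int (qn n) powr \<delta>\<rceil> else 0)"
  unfolding blk_def Lfun_def q_eq(1)[OF x] qn_def ..

lemma inf_insert: "\<exists>n\<ge>n0. blk \<delta> (sx x) n > 0"
proof (rule ccontr)
  assume "\<not> ?thesis"
  hence z: "\<forall>n\<ge>n0. blk \<delta> (sx x) n = 0" by auto
  have Ec: "EE \<delta> (sx x) (n0 + k) = EE \<delta> (sx x) n0" for k
    by (induction k) (use z in \<open>auto simp: EE_Suc\<close>)
  define E where "E = real (EE \<delta> (sx x) n0)"
  define k where "k = \<lceil>(3 + E) powr (1 / \<delta>)\<rceil>"
  obtain n1 where n1: "qn n1 \<ge> k" using qn_unbounded by blast
  define n where "n = max n0 n1"
  have qk: "qn n \<ge> k" using qn_mono[of n1 n] n1 unfolding n_def by simp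
  have E0: "E \<ge> 0" unfolding E_def by simp
  have "real_of_int (qn n) \<ge> (3 + E) powr (1 / \<delta>)" using qk unfolding k_def by linarith
  hence "real_of_int (qn n) powr \<delta> \<ge> ((3 + E) powr (1 / \<delta>)) powr \<delta>"
    using dpos by (intro powr_mono2) auto
  also have "((3 + E) powr (1 / \<delta>)) powr \<delta> = 3 + E" using dpos E0 by (simp add: powr_powr)
  finally have big: "real_of_int (qn n) powr \<delta> \<ge> 3 + E" .
  have "EE \<delta> (sx x) n = EE \<delta> (sx x) n0" using Ec[of "n - n0"] unfolding n_def by simp
  hence "3 \<le> real_of_int (qn n) powr \<delta> \<and> real (EE \<delta> (sx x) n) \<le> real_of_int (qn n) powr \<delta>"
    using big E0 unfolding E_def by simp
  hence "blk \<delta> (sx x) n = nat \<lceil>real_of_int (qn n) powr \<delta>\<rceil>" using blk_eq by simp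
  moreover have "nat \<lceil>real_of_int (qn n) powr \<delta>\<rceil> > 0" using big E0 by linarith
  moreover have "n \<ge> n0" unfolding n_def by simp
  ultimately show False using z by simp
qed

lemma approx_at: assumes b: "blk \<delta> (sx x) n > 0"
  shows "\<exists>p. \<bar>gmap x - real_of_int p / real_of_int (qn n)\<bar> < real_of_int (qn n) powr (-(2 + \<delta>))"
proof -
  let ?y = "gmap x"
  define m where "m = pp \<delta> (sx x) n + 1"
  define q where "q = real_of_int (qn n)"
  define L where "L = blk \<delta> (sx x) n"
  have q1: "q \<ge> 1" unfolding q_def using qn_pos by simp
  have Lv: "L = nat \<lceil>q powr \<delta>\<rceil>" using b blk_eq unfolding L_def q_def by (auto split: if_splits)
  have L1: "L \<ge> 1" using b unfolding L_def by simp
  have LL: "real L \<ge> q powr \<delta>" unfolding Lv by linarith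
  have ac: "\<bar>?y - of_int (fst (pq (bcf_digit ?y) m) - snd (pq (bcf_digit ?y) m)) / of_int (Dd (bcf_digit ?y) m)\<bar>
     \<le> (bcf_tail ?y (Suc m) - 1) / (of_int (Dd (bcf_digit ?y) m))^2"
    using approx_conv(1)[OF y_basic[OF x]] .
  have Dq: "real_of_int (Dd (bcf_digit ?y) m) = q" unfolding q_def qn_def m_def ..
  have bl: "bcf_tail ?y (Suc m) - 1 < 1 / L"
    using block_props(3)[OF y_basic(3)[OF x] _ y_dig_block[OF x, of n] L1[unfolded L_def]] unfolding m_def L_def by simp
  have "(bcf_tail ?y (Suc m) - 1) / q^2 < (1 / L) / q^2" using bl q1 by (intro divide_strict_right_mono) auto
  also have "(1 / L) / q^2 \<le> (1 / q powr \<delta>) / q^2"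
  proof -
    have qp: "q powr \<delta> > 0" using q1 by simp
    hence "real L > 0" using LL by linarith
    hence pos: "0 < real L * q powr \<delta>" using qp by simp
    have "1 / real L \<le> 1 / q powr \<delta>" using divide_left_mono[OF LL _ pos, of 1] by simp
    thus ?thesis by (rule divide_right_mono) simp
  qed
  also have "(1 / q powr \<delta>) / q^2 = q powr (-(2 + \<delta>))"
  proof -
    have "q powr (-(2 + \<delta>)) = 1 / q powr (2 + \<delta>)" by (rule powr_minus_divide)
    also have "q powr (2 + \<delta>) = q powr 2 * q powr \<delta>" by (rule powr_add)
    also have "q powr 2 = q^2" using q1 by (simp add: powr_numeral)
    finally show ?thesis by simp
  qed
  finally have "\<bar>?y - of_int (fst (pq (bcf_digit ?y) m) - snd (pq (bcf_digit ?y) m)) / q\<bar> < q powr (-(2 + \<delta>))"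
    using ac unfolding Dq by linarith
  thus ?thesis unfolding q_def by blast
qed

lemma irrat_gt2: "irrat_exp (gmap x) > 2"
proof -
  let ?y = "gmap x"
  define S where "S = {(p :: int, q :: nat). q > 0 \<and> coprime p (int q) \<and> \<bar>?y - real_of_int p / real q\<bar> < real q powr (- (2 + \<delta>))}"
  have yirr: "?y \<notin> \<rat>" using y_basic[OF x] by simp
  have infS: "infinite S"
  proof
    assume fin: "finite S"
    define f where "f = (\<lambda>(p :: int, q :: nat). \<bar>?y - real_of_int p / real q\<bar>)"
    define d where "d = Min (insert 1 (f ` S))"
    have dpos': "d > 0" unfolding d_def using fin
    proof (subst Min_gr_iff)
      show "\<forall>a\<in>insert 1 (f ` S). 0 < a"
      proof
        fix a assume "a \<in> insert 1 (f ` S)"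
        then consider "a = 1" | p q where "(p, q) \<in> S" "a = f (p, q)" by auto
        thus "0 < a"
        proof cases
          case 1 then show ?thesis by simp
        next
          case 2
          have "real_of_int p / real q \<in> \<rat>" by simp
          hence "?y \<noteq> real_of_int p / real q" using yirr by auto
          then show ?thesis using 2 unfolding f_def by simp
        qed
      qed
    qed auto
    have dle: "d \<le> f a" if "a \<in> S" for a unfolding d_def using fin that by (intro Min_le) auto
    obtain n1 where n1: "qn n1 \<ge> \<lceil>1 / d\<rceil> + 1" using qn_unbounded by blast
    obtain n where n: "n \<ge> n1" "blk \<delta> (sx x) n > 0" using inf_insert by blast
    have qbig: "real_of_int (qn n) > 1 / d" using qn_mono[OF n(1)] n1 by linarith
    obtain p0 where p0: "\<bar>?y - real_of_int p0 / real_of_int (qn n)\<bar> < real_of_int (qn n) powr (-(2 + \<delta>))"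
      using approx_at[OF n(2)] by blast
    obtain p q where pq: "q > 0" "coprime p q" "q \<le> qn n" "real_of_int p / real_of_int q = real_of_int p0 / real_of_int (qn n)"
      using reduce_frac[of "qn n" p0] qn_pos[of n] by auto
    have q1: "real_of_int q \<ge> 1" using pq by simp
    have "real_of_int (qn n) powr (-(2 + \<delta>)) \<le> real_of_int q powr (-(2 + \<delta>))"
      using pq(3) q1 dpos by (intro powr_mono2') auto
    hence inS: "(p, nat q) \<in> S" unfolding S_def using pq p0 by auto
    have "real_of_int (qn n) powr (-(2 + \<delta>)) \<le> real_of_int (qn n) powr (-1)"
      using qn_pos[of n] dpos by (intro powr_mono) auto
    also have "\<dots> = 1 / real_of_int (qn n)" using qn_pos[of n] by (simp add: powr_minus inverse_eq_divide)
    also have "\<dots> < d" using qbig dpos' qn_pos[of n] by (simp add: field_simps)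
    finally have "f (p, nat q) < d" using p0 pq unfolding f_def by auto
    thus False using dle[OF inS] by simp
  qed
  have "ereal (2 + \<delta>) \<in> {ereal m | m. infinite {(p :: int, q :: nat).
      q > 0 \<and> coprime p (int q) \<and> \<bar>?y - real_of_int p / real q\<bar> < real q powr (- m)}}"
    using infS unfolding S_def by blast
  hence le: "ereal (2 + \<delta>) \<le> irrat_exp ?y" unfolding irrat_exp_def by (rule Sup_upper)
  have lt: "(2::ereal) < ereal (2 + \<delta>)" using dpos by simp
  show ?thesis using less_le_trans[OF lt le] .
qed

end
end


definition covers :: "real \<Rightarrow> real set \<Rightarrow> (nat \<Rightarrow> real set) set" where
  "covers \<delta> A = {U. A \<subseteq> (\<Union>i. U i) \<and> (\<forall>i. bounded (U i) \<and> diameter (U i) \<le> \<delta>)}"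

lemma pre_def': "hausdorff_pre s \<delta> A = (INF U \<in> covers \<delta> A. (\<Sum>i. ennreal (diameter (U i) powr s)))"
  unfolding hausdorff_pre_def covers_def ..

lemma hm_zero: "hausdorff_measure s A = 0 \<longleftrightarrow> (\<forall>\<delta>>0. hausdorff_pre s \<delta> A = 0)"
  unfolding hausdorff_measure_def using SUP_bot_conv(1)[where 'a=ennreal, unfolded bot_ennreal, of "\<lambda>\<delta>. hausdorff_pre s \<delta> A" "{0<..}"]
  by auto

lemma pre_mono: "A \<subseteq> C \<Longrightarrow> hausdorff_pre s \<delta> A \<le> hausdorff_pre s \<delta> C"
  unfolding pre_def' by (rule INF_superset_mono) (auto simp: covers_def)

lemma hm_mono0: "A \<subseteq> C \<Longrightarrow> hausdorff_measure s C = 0 \<Longrightarrow> hausdorff_measure s A = 0"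
  unfolding hm_zero using pre_mono by (metis le_zero_eq)

lemma pre_zeroI: assumes "\<And>e. e > 0 \<Longrightarrow> \<exists>U\<in>covers \<delta> A. (\<Sum>i. ennreal (diameter (U i) powr s)) \<le> ennreal e"
  shows "hausdorff_pre s \<delta> A = 0"
proof -
  have "hausdorff_pre s \<delta> A \<le> 0"
  proof (rule ennreal_le_epsilon)
    fix e :: real assume e: "0 < e"
    obtain U where U: "U \<in> covers \<delta> A" "(\<Sum>i. ennreal (diameter (U i) powr s)) \<le> ennreal e" using assms[OF e] by blast
    have "hausdorff_pre s \<delta> A \<le> (\<Sum>i. ennreal (diameter (U i) powr s))" unfolding pre_def' using U(1) by (rule INF_lower)
    thus "hausdorff_pre s \<delta> A \<le> 0 + ennreal e" using U(2) by simp
  qed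
  thus ?thesis by simp
qed

lemma pre_zeroD: assumes "hausdorff_pre s \<delta> A = 0" "e > 0"
  shows "\<exists>U\<in>covers \<delta> A. (\<Sum>i. ennreal (diameter (U i) powr s)) < ennreal e"
proof -
  have "hausdorff_pre s \<delta> A < ennreal e" using assms by simp
  thus ?thesis unfolding pre_def' by (simp add: INF_less_iff)
qed

lemma hm2_unit: assumes "A \<subseteq> {0..1}" shows "hausdorff_measure 2 A = 0"
  unfolding hm_zero
proof (intro allI impI)
  fix \<delta> :: real assume d: "\<delta> > 0"
  show "hausdorff_pre 2 \<delta> A = 0"
  proof (rule pre_zeroI)
    fix e :: real assume e: "e > 0"
    define n :: nat where "n = nat \<lceil>1 / \<delta> + 2 / e\<rceil> + 1"
    have n1: "real n \<ge> 1" unfolding n_def by simp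
    have c: "real (nat \<lceil>1 / \<delta> + 2 / e\<rceil>) \<ge> 1 / \<delta> + 2 / e" by (rule real_nat_ceiling_ge)
    have pp: "1 / \<delta> > 0" "2 / e > 0" using d e by auto
    have rn: "real n = real (nat \<lceil>1 / \<delta> + 2 / e\<rceil>) + 1" unfolding n_def by simp
    have nd: "real n \<ge> 1 / \<delta>" "real n \<ge> 2 / e" using rn c pp by linarith+
    define U where "U i = (if i \<le> n then {real i / n .. (real i + 1) / n} else {})" for i
    have diamU: "diameter (U i) = (if i \<le> n then 1 / n else 0)" for i
      unfolding U_def using n1 by (auto simp: field_simps)
    have "U \<in> covers \<delta> A" unfolding covers_def
    proof (intro CollectI conjI allI)
      show "A \<subseteq> (\<Union>i. U i)"
      proof
        fix x assume "x \<in> A"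
        hence x: "0 \<le> x" "x \<le> 1" using assms by auto
        define i where "i = nat \<lfloor>x * n\<rfloor>"
        have z0: "x * real n \<ge> 0" using x n1 by simp
        have ri: "real i = real_of_int \<lfloor>x * real n\<rfloor>" unfolding i_def using z0 by simp
        have fl: "real i \<le> x * n" "x * n < real i + 1"
          using ri of_int_floor_le[of "x * real n"] real_of_int_floor_add_one_gt[of "x * real n"] by linarith+
        have "i \<le> n"
        proof -
          have "x * n \<le> n" using x n1 by (simp add: mult_left_le_one_le)
          thus ?thesis unfolding i_def by (simp add: nat_le_iff floor_le_iff)
        qed
        moreover have "real i / n \<le> x" "x \<le> (real i + 1) / n" using fl n1 by (simp_all add: field_simps)
        ultimately show "x \<in> (\<Union>i. U i)" unfolding U_def by auto
      qed
      fix i show "bounded (U i)" unfolding U_def by auto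
      show "diameter (U i) \<le> \<delta>" unfolding diamU using nd d n1 by (auto simp: field_simps)
    qed
    moreover have "(\<Sum>i. ennreal (diameter (U i) powr 2)) \<le> ennreal e"
    proof -
      have "(\<Sum>i. ennreal (diameter (U i) powr 2)) = (\<Sum>i\<in>{..n}. ennreal (diameter (U i) powr 2))"
        by (rule suminf_finite) (auto simp: diamU)
      also have "\<dots> = (\<Sum>i\<in>{..n}. ennreal ((1 / n) powr 2))" by (simp add: diamU)
      also have "\<dots> = ennreal (\<Sum>i\<in>{..n}. (1 / real n) powr 2)" by (rule sum_ennreal) simp
      also have "(\<Sum>i\<in>{..n}. (1 / real n) powr 2) = real (Suc n) * (1 / n) powr 2" by (simp only: sum_constant card_atMost)
      also have "real (Suc n) * (1 / n) powr 2 \<le> e"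
      proof -
        have "(1 / real n) powr 2 = 1 / (real n * real n)" using n1 by (simp add: powr_numeral power2_eq_square)
        hence "real (Suc n) * (1 / n) powr 2 = (real n + 1) / (real n * real n)" by simp
        also have "\<dots> \<le> (2 * real n) / (real n * real n)" using n1 by (intro divide_right_mono) auto
        also have "\<dots> = 2 / real n" using n1 by simp
        also have "\<dots> \<le> e" using nd e n1 by (simp add: field_simps)
        finally show ?thesis .
      qed
      hence "ennreal (real (Suc n) * (1 / n) powr 2) \<le> ennreal e" by (rule ennreal_leI)
      finally show ?thesis .
    qed
    ultimately show "\<exists>U\<in>covers \<delta> A. (\<Sum>i. ennreal (diameter (U i) powr 2)) \<le> ennreal e" by blast
  qed
qed

lemma hm_holder:
  fixes f :: "real \<Rightarrow> real"
  assumes X: "bounded X" and C: "C > 0" and a: "0 < a" "a \<le> 1" and t: "t > 0"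
    and H: "\<And>x x'. x \<in> X \<Longrightarrow> x' \<in> X \<Longrightarrow> \<bar>x - x'\<bar> \<le> C * \<bar>f x - f x'\<bar> powr a"
    and Z: "hausdorff_measure t (f ` X) = 0"
  shows "hausdorff_measure (t / a) X = 0"
  unfolding hm_zero
proof (intro allI impI)
  fix \<delta> :: real assume d: "\<delta> > 0"
  define d' where "d' = (\<delta> / C) powr (1 / a)"
  have d'pos: "d' > 0" unfolding d'_def using d C by simp
  have d'a: "C * d' powr a = \<delta>" unfolding d'_def using d C a by (simp add: powr_powr)
  show "hausdorff_pre (t / a) \<delta> X = 0"
  proof (rule pre_zeroI)
    fix e :: real assume e: "e > 0"
    define c where "c = C powr (t / a)"
    have cpos: "c > 0" unfolding c_def using C by simp
    have z: "hausdorff_pre t d' (f ` X) = 0" using Z d'pos unfolding hm_zero by simp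
    obtain U where U: "U \<in> covers d' (f ` X)" "(\<Sum>i. ennreal (diameter (U i) powr t)) < ennreal (e / c)"
      using pre_zeroD[OF z] e cpos by (metis divide_pos_pos)
    define V where "V i = X \<inter> f -` U i" for i
    have Ub: "bounded (U i)" "diameter (U i) \<le> d'" "f ` X \<subseteq> (\<Union>i. U i)" for i using U(1) unfolding covers_def by auto
    have diamV: "diameter (V i) \<le> C * diameter (U i) powr a" for i
    proof (rule diameter_le)
      show "V i \<noteq> {} \<or> 0 \<le> C * diameter (U i) powr a" using C by simp
      fix v v' assume vv: "v \<in> V i" "v' \<in> V i"
      have "dist (f v) (f v') \<le> diameter (U i)" using diameter_bounded_bound[OF Ub(1)] vv unfolding V_def by auto
      hence "\<bar>f v - f v'\<bar> powr a \<le> diameter (U i) powr a" using a by (intro powr_mono2) (auto simp: dist_real_def)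
      hence "C * \<bar>f v - f v'\<bar> powr a \<le> C * diameter (U i) powr a" using C by simp
      thus "norm (v - v') \<le> C * diameter (U i) powr a" using H vv unfolding V_def by force
    qed
    have "V \<in> covers \<delta> X" unfolding covers_def
    proof (intro CollectI conjI allI)
      show "X \<subseteq> (\<Union>i. V i)"
      proof
        fix v assume v: "v \<in> X"
        hence "f v \<in> (\<Union>i. U i)" using Ub(3) by blast
        then obtain i where "f v \<in> U i" by blast
        thus "v \<in> (\<Union>i. V i)" using v unfolding V_def by blast
      qed
      fix i show "bounded (V i)" unfolding V_def using X by (rule bounded_subset) auto
      have "diameter (U i) powr a \<le> d' powr a" using Ub(2) a diameter_ge_0[OF Ub(1)] by (intro powr_mono2) auto
      hence "C * diameter (U i) powr a \<le> C * d' powr a" using C by simp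
      thus "diameter (V i) \<le> \<delta>" using diamV[of i] d'a by simp
    qed
    moreover have "(\<Sum>i. ennreal (diameter (V i) powr (t / a))) \<le> ennreal e"
    proof -
      have le: "ennreal (diameter (V i) powr (t / a)) \<le> ennreal c * ennreal (diameter (U i) powr t)" for i
      proof -
        have "diameter (V i) powr (t / a) \<le> (C * diameter (U i) powr a) powr (t / a)"
          using diamV[of i] diameter_ge_0[of "V i"] a t bounded_subset[OF X, of "V i"]
          by (intro powr_mono2) (auto simp: V_def)
        also have "\<dots> = c * diameter (U i) powr t" unfolding c_def using C a diameter_ge_0[OF Ub(1)]
          by (simp add: powr_mult powr_powr)
        finally show ?thesis using cpos by (simp add: ennreal_mult[symmetric] ennreal_leI)
      qed
      have "(\<Sum>i. ennreal (diameter (V i) powr (t / a))) \<le> (\<Sum>i. ennreal c * ennreal (diameter (U i) powr t))"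
        by (intro suminf_le le) auto
      also have "\<dots> = ennreal c * (\<Sum>i. ennreal (diameter (U i) powr t))" by simp
      also have "\<dots> \<le> ennreal c * ennreal (e / c)" using U(2) by (intro mult_left_mono) auto
      also have "\<dots> = ennreal (c * (e / c))" using cpos e by (intro ennreal_mult[symmetric]) auto
      also have "\<dots> = ennreal e" using cpos by simp
      finally show ?thesis .
    qed
    ultimately show "\<exists>U\<in>covers \<delta> X. (\<Sum>i. ennreal (diameter (U i) powr (t / a))) \<le> ennreal e" by blast
  qed
qed


context bset begin

lemma FB_unit: "F_B B \<subseteq> {0..1}" unfolding F_B_def by auto

theorem main: "hausdorff_dim {x \<in> F_B B. irrat_exp x > 2} = hausdorff_dim (F_B B)"
proof -
  define A where "A = {x \<in> F_B B. irrat_exp x > 2}"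
  define SA where "SA = {s. s > 0 \<and> hausdorff_measure s A = 0}"
  define SF where "SF = {s. s > 0 \<and> hausdorff_measure s (F_B B) = 0}"
  have AF: "A \<subseteq> F_B B" unfolding A_def by auto
  have twoF: "2 \<in> SF" unfolding SF_def using hm2_unit[OF FB_unit] by simp
  have twoA: "2 \<in> SA" unfolding SA_def using hm2_unit[of A] AF FB_unit by auto
  have bA: "bdd_below SA" unfolding SA_def by (rule bdd_belowI[of _ 0]) auto
  have bF: "bdd_below SF" unfolding SF_def by (rule bdd_belowI[of _ 0]) auto
  have sub: "SF \<subseteq> SA" unfolding SF_def SA_def using hm_mono0[OF AF] by auto
  have le1: "Inf SA \<le> Inf SF" using cInf_superset_mono[of SF SA] twoF bA sub by auto
  have key: "s * (1 + 4 * d) \<in> SF" if s: "s \<in> SA" and d: "0 < d" "d \<le> 1/4" for s d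
  proof -
    interpret I: ins B d by unfold_locales (use d in auto)
    have img: "I.gmap ` F_B B \<subseteq> A" unfolding A_def using I.y_FB I.irrat_gt2 by auto
    have s0: "s > 0" "hausdorff_measure s A = 0" using s unfolding SA_def by auto
    have z: "hausdorff_measure s (I.gmap ` F_B B) = 0" using hm_mono0[OF img s0(2)] .
    have bnd: "bounded (F_B B)" using FB_unit by (rule bounded_subset[rotated]) simp
    have Kp: "4 * (real K)^2 > 0" using K_ge3 by simp
    have "hausdorff_measure (s / (1 / (1 + 4 * d))) (F_B B) = 0"
      using hm_holder[OF bnd Kp _ _ s0(1) I.holder z] d by (simp add: field_simps)
    moreover have "s / (1 / (1 + 4 * d)) = s * (1 + 4 * d)" by simp
    ultimately show ?thesis unfolding SF_def using s0 d by (simp add: mult_pos_pos)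
  qed
  have le2: "Inf SF \<le> s" if s: "s \<in> SA" for s
  proof (rule ccontr)
    assume "\<not> Inf SF \<le> s"
    hence gt: "Inf SF > s" by simp
    have s0: "s > 0" using s unfolding SA_def by simp
    define d where "d = min (1/4) ((Inf SF - s) / (8 * s))"
    have d: "0 < d" "d \<le> 1/4" unfolding d_def using gt s0 by auto
    have "d \<le> (Inf SF - s) / (8 * s)" unfolding d_def by simp
    hence "8 * s * d \<le> Inf SF - s" using s0 by (simp add: field_simps)
    hence lt: "s * (1 + 4 * d) < Inf SF" using s0 d gt by (simp add: algebra_simps)
    have "Inf SF \<le> s * (1 + 4 * d)" using cInf_lower[OF key[OF s d] bF] .
    thus False using lt by simp
  qed
  have "Inf SF \<le> Inf SA" using twoA le2 by (intro cInf_greatest) auto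
  hence "Inf SA = Inf SF" using le1 by simp
  thus ?thesis unfolding hausdorff_dim_def SA_def SF_def A_def .
qed

end

theorem corollary1:
  fixes B :: "nat set"
  assumes "finite B" and "card B \<ge> 2" and "2 \<in> B" and "\<forall>b\<in>B. b \<ge> 2"
  shows "hausdorff_dim {x \<in> F_B B. irrat_exp x > 2} = hausdorff_dim (F_B B)"
proof -
  interpret bset B using assms by unfold_locales auto
  show ?thesis by (rule main)
qed


end
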